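(* In the setting described in the context (with the relaxed barrier function based MPC cost $\hat{J}_N:\mathbb{R}^{Nm}\times\mathbb{R}^n\to\mathbb{R}_+$), the following hold. (i) There exist $\underline{\alpha},\bar{\alpha}\in\mathcal{K}_\infty$ such that $\underline{\alpha}(\|(U,x)\|)\le \hat{J}_N(U,x)\le \bar{\alpha}(\|(U,x)\|)$ for all $(U,x)\in\mathbb{R}^{Nm}\times\mathbb{R}^n$. (ii) $\hat{J}_N(U,x)$ is strongly convex in $U$ and convex in $x$, and there exist $\sigma,L>0$ such that for all $U,U_1,U_2\in\mathbb{R}^{Nm}$ and $x\in\mathbb{R}^n$: $\sigma I\preceq \nabla_U^2\hat{J}_N(U,x)\preceq L I$ and $\|\nabla_U\hat{J}_N(U_1,x)-\nabla_U\hat{J}_N(U_2,x)\|\le L\|U_1-U_2\|$. (iii) There exists a function $k_f:\mathbb{R}^{Nm}\times\mathbb{R}^n\to\mathbb{R}^m$ with $k_f(0,0)=0$ such that for every $(U_0,x_0)\in\mathbb{R}^{Nm}\times\mathbb{R}^n$, writing $U_0=(u_0,\dots,u_{N-1})$, $x_0^+:=Ax_0+Bu_0$ and $U_0^+:=(u_1,\dots,u_{N-1},k_f(U_0,x_0))$, one has $\hat{J}_N(U_0^+,x_0^+)-\hat{J}_N(U_0,x_0)\le -\hat{\ell}(x_0,u_0)$.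
   Context: Let $n,m,N\in\mathbb{N}_+$, $A\in\mathbb{R}^{n\times n}$, $B\in\mathbb{R}^{n\times m}$ with $(A,B)$ stabilizable. Let $\mathcal{X}=\{x\in\mathbb{R}^n: C_{\mathrm{x}}x\le d_{\mathrm{x}}\}$ and $\mathcal{U}=\{u\in\mathbb{R}^m: C_{\mathrm{u}}u\le d_{\mathrm{u}}\}$ be compact polytopes, with $C_{\mathrm{x}}\in\mathbb{R}^{q_{\mathrm{x}}\times n}$, $C_{\mathrm{u}}\in\mathbb{R}^{q_{\mathrm{u}}\times m}$ and $d_{\mathrm{x}}\in\mathbb{R}^{q_{\mathrm{x}}}$, $d_{\mathrm{u}}\in\mathbb{R}^{q_{\mathrm{u}}}$ having all entries strictly positive; a superscript $i$ denotes the $i$-th row of a matrix or entry of a vector, and $\mathds{1}$ is the all-ones vector. Fix $\varepsilon>0$, $Q$ symmetric positive semidefinite, $R$ symmetric positive definite, a relaxation parameter $\delta$ with $0<\delta\le\min\{d_{\mathrm{x}}^1,\dots,d_{\mathrm{x}}^{q_{\mathrm{x}}},d_{\mathrm{u}}^1,\dots,d_{\mathrm{u}}^{q_{\mathrm{u}}}\}$, and weight vectors $w_{\mathrm{x}}\in\mathbb{R}^{q_{\mathrm{x}}}$, $w_{\mathrm{u}}\in\mathbb{R}^{q_{\mathrm{u}}}$ with nonnegative entries satisfying $C_{\mathrm{x}}^\top\mathrm{diag}(1/d_{\mathrm{x}}^1,\dots,1/d_{\mathrm{x}}^{q_{\mathrm{x}}})(\mathds{1}+w_{\mathrm{x}})=0$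 and $C_{\mathrm{u}}^\top\mathrm{diag}(1/d_{\mathrm{u}}^1,\dots,1/d_{\mathrm{u}}^{q_{\mathrm{u}}})(\mathds{1}+w_{\mathrm{u}})=0$. The relaxed logarithmic barrier is $\hat{B}(z)=-\ln z$ for $z>\delta$ and $\hat{B}(z)=\tfrac12\big[\big(\tfrac{z-2\delta}{\delta}\big)^2-1\big]-\ln\delta$ for $z\le\delta$. The recentered relaxed barriers are $\hat{B}_{\mathrm{x}}(x)=\sum_{i=1}^{q_{\mathrm{x}}}(1+w_{\mathrm{x}}^i)\big(\hat{B}(-C_{\mathrm{x}}^ix+d_{\mathrm{x}}^i)+\ln d_{\mathrm{x}}^i\big)$ and $\hat{B}_{\mathrm{u}}(u)=\sum_{j=1}^{q_{\mathrm{u}}}(1+w_{\mathrm{u}}^j)\big(\hat{B}(-C_{\mathrm{u}}^ju+d_{\mathrm{u}}^j)+\ln d_{\mathrm{u}}^j\big)$. The stage cost is $\hat{\ell}(x,u)=x^\top Qx+u^\top Ru+\varepsilon\hat{B}_{\mathrm{x}}(x)+\varepsilon\hat{B}_{\mathrm{u}}(u)$. Let $M_{\mathrm{x}}=\frac{1}{2\delta^2}C_{\mathrm{x}}^\top\mathrm{diag}(\mathds{1}+w_{\mathrm{x}})C_{\mathrm{x}}$, $M_{\mathrm{u}}=\frac{1}{2\delta^2}C_{\mathrm{u}}^\top\mathrm{diag}(\mathds{1}+w_{\mathrm{u}})C_{\mathrm{u}}$, and let $P$ be a symmetric positive definite matrix solving $K=-(R+B^\top PB+\varepsilon M_{\mathrm{u}})^{-1}B^\top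 PA$, $P=(A+BK)^\top P(A+BK)+K^\top(R+\varepsilon M_{\mathrm{u}})K+Q+\varepsilon M_{\mathrm{x}}$. For a stacked input vector $U=(u_0,\dots,u_{N-1})\in\mathbb{R}^{Nm}$ and $x\in\mathbb{R}^n$, let $x_0=x$ and $x_{k+1}=Ax_k+Bu_k$, i.e. $x_k(U,x)=A^kx+\sum_{i=0}^{k-1}A^iBu_{k-1-i}$, and define $\hat{J}_N(U,x)=\sum_{k=0}^{N-1}\hat{\ell}(x_k,u_k)+x_N^\top Px_N$. A function $\alpha:\mathbb{R}_+\to\mathbb{R}_+$ is in $\mathcal{K}_\infty$ if it is continuous, strictly increasing, $\alpha(0)=0$ and $\alpha(s)\to\infty$ as $s\to\infty$. *)

theory Defs
  imports "HOL-Analysis.Analysis"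
begin

section \<open>Linear-algebra notions\<close>

definition diag_mat :: "real^'q \<Rightarrow> real^'q^'q" where
  "diag_mat v = (\<chi> i j. if i = j then v $ i else 0)"

definition sym_mat :: "real^'n^'n \<Rightarrow> bool" where
  "sym_mat M \<longleftrightarrow> transpose M = M"

definition psd_mat :: "real^'n^'n \<Rightarrow> bool" where
  "psd_mat M \<longleftrightarrow> sym_mat M \<and> (\<forall>x. 0 \<le> x \<bullet> (M *v x))"

definition pd_mat :: "real^'n^'n \<Rightarrow> bool" where
  "pd_mat M \<longleftrightarrow> sym_mat M \<and> (\<forall>x. x \<noteq> 0 \<longrightarrow> 0 < x \<bullet> (M *v x))"

text \<open>Schur stability: every (complex) eigenvalue has modulus < 1.\<close>
definition schur_stable :: "real^'n^'n \<Rightarrow> bool" where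
  "schur_stable M \<longleftrightarrow>
     (\<forall>(lam::complex) (v::complex^'n). v \<noteq> 0 \<and>
        (\<chi> i j. complex_of_real (M $ i $ j)) *v v = lam *s v \<longrightarrow> cmod lam < 1)"

definition stabilizable :: "real^'n^'n \<Rightarrow> real^'m^'n \<Rightarrow> bool" where
  "stabilizable A B \<longleftrightarrow> (\<exists>K :: real^'n^'m. schur_stable (A + B ** K))"

section \<open>Comparison functions and strong convexity\<close>

definition K_inf :: "(real \<Rightarrow> real) \<Rightarrow> bool" where
  "K_inf \<alpha> \<longleftrightarrow> continuous_on {0..} \<alpha> \<and> strict_mono_on {0..} \<alpha> \<and> \<alpha> 0 = 0
     \<and> (\<forall>s\<ge>0. 0 \<le> \<alpha> s) \<and> filterlim \<alpha> at_top at_top"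

definition strongly_convex_on :: "'a::real_normed_vector set \<Rightarrow> ('a \<Rightarrow> real) \<Rightarrow> bool" where
  "strongly_convex_on S f \<longleftrightarrow> (\<exists>\<mu>>0. \<forall>x\<in>S. \<forall>y\<in>S. \<forall>t\<in>{0..1}.
      f ((1 - t) *\<^sub>R x + t *\<^sub>R y) \<le> (1 - t) * f x + t * f y - \<mu> / 2 * t * (1 - t) * (norm (x - y))\<^sup>2)"

section \<open>Relaxed barrier and MPC cost\<close>

definition relaxed_barrier :: "real \<Rightarrow> real \<Rightarrow> real" where
  "relaxed_barrier \<delta> z = (if z > \<delta> then - ln z else 1/2 * (((z - 2*\<delta>) / \<delta>)\<^sup>2 - 1) - ln \<delta>)"

text \<open>Recentered relaxed barrier for the polytope {y. C y \<le> d} with weights w.\<close>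
definition rec_barrier :: "real \<Rightarrow> real^'k^'q \<Rightarrow> real^'q \<Rightarrow> real^'q \<Rightarrow> real^'k \<Rightarrow> real" where
  "rec_barrier \<delta> C d w y = (\<Sum>i\<in>UNIV. (1 + w $ i) * (relaxed_barrier \<delta> (- ((C $ i) \<bullet> y) + d $ i) + ln (d $ i)))"

definition stage_cost ::
  "real^'n^'n \<Rightarrow> real^'m^'m \<Rightarrow> real \<Rightarrow> real \<Rightarrow> real^'n^'qx \<Rightarrow> real^'qx \<Rightarrow> real^'qx
   \<Rightarrow> real^'m^'qu \<Rightarrow> real^'qu \<Rightarrow> real^'qu \<Rightarrow> real^'n \<Rightarrow> real^'m \<Rightarrow> real" where
  "stage_cost Q R \<epsilon> \<delta> Cx dx wx Cu du wu x u =
     x \<bullet> (Q *v x) + u \<bullet> (R *v u) + \<epsilon> * rec_barrier \<delta> Cx dx wx x + \<epsilon> * rec_barrier \<delta> Cu du wu u"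

text \<open>Stacked input vectors U = (u_0,...,u_{N-1}) live in real^'m^'N with N = CARD('N::enum);
  the k-th block is the entry at the k-th element of the enumeration of 'N.\<close>
definition blk :: "real^'m^'N::enum \<Rightarrow> nat \<Rightarrow> real^'m" where
  "blk U k = U $ (enum_class.enum ! k)"

definition blk_idx :: "'N::enum \<Rightarrow> nat" where
  "blk_idx j = (THE k. k < length (enum_class.enum :: 'N::enum list) \<and> enum_class.enum ! k = j)"

text \<open>Shifted input sequence (u_1,...,u_{N-1}, v).\<close>
definition shift_in :: "real^'m^'N::enum \<Rightarrow> real^'m \<Rightarrow> real^'m^'N::enum" where
  "shift_in U v = (\<chi> j. if blk_idx j + 1 < CARD('N::enum) then blk U (blk_idx j + 1) else v)"

primrec traj :: "real^'n^'n \<Rightarrow> real^'m^'n \<Rightarrow> real^'n \<Rightarrow> (nat \<Rightarrow> real^'m) \<Rightarrow> nat \<Rightarrow> real^'n" where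
  "traj A B x u 0 = x"
| "traj A B x u (Suc k) = A *v traj A B x u k + B *v u k"

definition mpc_cost ::
  "real^'n^'n \<Rightarrow> real^'m^'n \<Rightarrow> real^'n^'n \<Rightarrow> real^'m^'m \<Rightarrow> real^'n^'n \<Rightarrow> real \<Rightarrow> real
   \<Rightarrow> real^'n^'qx \<Rightarrow> real^'qx \<Rightarrow> real^'qx \<Rightarrow> real^'m^'qu \<Rightarrow> real^'qu \<Rightarrow> real^'qu
   \<Rightarrow> real^'m^'N::enum \<Rightarrow> real^'n \<Rightarrow> real" where
  "mpc_cost A B Q R P \<epsilon> \<delta> Cx dx wx Cu du wu U x =
     (\<Sum>k<CARD('N::enum). stage_cost Q R \<epsilon> \<delta> Cx dx wx Cu du wu (traj A B x (blk U) k) (blk U k))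
     + traj A B x (blk U) CARD('N::enum) \<bullet> (P *v traj A B x (blk U) CARD('N::enum))"

end

theory Submission
  imports Defs
begin

definition b1 :: "real \<Rightarrow> real \<Rightarrow> real" where
  "b1 \<delta> z = (if z > \<delta> then -1/z else (z - 2*\<delta>)/\<delta>\<^sup>2)"
definition b2 :: "real \<Rightarrow> real \<Rightarrow> real" where
  "b2 \<delta> z = (if z > \<delta> then 1/z\<^sup>2 else 1/\<delta>\<^sup>2)"

lemma rb_deriv:
  assumes d: "0 < \<delta>"
  shows "(relaxed_barrier \<delta> has_real_derivative b1 \<delta> z) (at z)"
proof -
  have "((\<lambda>z. if z \<in> {\<delta><..} then -ln z else 1/2*(((z-2*\<delta>)/\<delta>)\<^sup>2-1) - ln \<delta>) has_derivative
     (if z \<in> {\<delta><..} then (\<lambda>h. h * (-1/z)) else (\<lambda>h. h * ((z-2*\<delta>)/\<delta>\<^sup>2)))) (at z within ({\<delta><..} \<union> {..\<delta>}))"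
  proof (rule has_derivative_If_within_closures)
    show "((\<lambda>z. -ln z) has_derivative (\<lambda>h. h * (-1/z))) (at z within {\<delta><..} \<union> (closure {\<delta><..} \<inter> closure {..\<delta>}))"
      if "z \<in> {\<delta><..} \<union> (closure {\<delta><..} \<inter> closure {..\<delta>})"
    proof -
      have "z > 0" using that d by auto
      then have "((\<lambda>z. -ln z) has_real_derivative (-1/z)) (at z)"
        by (auto intro!: derivative_eq_intros simp: field_simps)
      moreover have "(*) (-1/z) = (\<lambda>h. h * (-1/z))" by (auto simp: fun_eq_iff)
      ultimately show ?thesis unfolding has_field_derivative_def
        by (metis has_derivative_at_withinI)
    qed
    show "((\<lambda>z. 1/2*(((z-2*\<delta>)/\<delta>)\<^sup>2-1) - ln \<delta>) has_derivative (\<lambda>h. h * ((z-2*\<delta>)/\<delta>\<^sup>2))) (at z within {..\<delta>} \<union> (closure {\<delta><..} \<inter> closure {..\<delta>}))"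
    proof -
      have "((\<lambda>z. 1/2*(((z-2*\<delta>)/\<delta>)\<^sup>2-1) - ln \<delta>) has_real_derivative ((z-2*\<delta>)/\<delta>\<^sup>2)) (at z)"
        using d by (auto intro!: derivative_eq_intros simp: field_simps power2_eq_square)
      moreover have "(*) ((z-2*\<delta>)/\<delta>\<^sup>2) = (\<lambda>h. h * ((z-2*\<delta>)/\<delta>\<^sup>2))" by (auto simp: fun_eq_iff)
      ultimately show ?thesis unfolding has_field_derivative_def
        by (metis has_derivative_at_withinI)
    qed
    show "-ln z = 1/2*(((z-2*\<delta>)/\<delta>)\<^sup>2-1) - ln \<delta>" if "z \<in> closure {\<delta><..}" "z \<in> closure {..\<delta>}"
      using that d by (auto simp: field_simps power2_eq_square)
    show "(\<lambda>h. h * (-1/z)) = (\<lambda>h. h * ((z-2*\<delta>)/\<delta>\<^sup>2))" if "z \<in> closure {\<delta><..}" "z \<in> closure {..\<delta>}"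
      using that d by (auto simp: field_simps power2_eq_square)
  qed auto
  moreover have "{\<delta><..} \<union> {..\<delta>} = (UNIV::real set)" by auto
  moreover have "(\<lambda>z. if z \<in> {\<delta><..} then -ln z else 1/2*(((z-2*\<delta>)/\<delta>)\<^sup>2-1) - ln \<delta>) = relaxed_barrier \<delta>"
    by (auto simp: relaxed_barrier_def fun_eq_iff)
  moreover have "(if z \<in> {\<delta><..} then (\<lambda>h. h * (-1/z)) else (\<lambda>h. h * ((z-2*\<delta>)/\<delta>\<^sup>2))) = (*) (b1 \<delta> z)"
    by (auto simp: b1_def fun_eq_iff)
  ultimately show ?thesis
    unfolding has_field_derivative_def by simp
qed

lemma b1_deriv:
  assumes d: "0 < \<delta>"
  shows "(b1 \<delta> has_real_derivative b2 \<delta> z) (at z)"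
proof -
  have "((\<lambda>z. if z \<in> {\<delta><..} then -1/z else (z - 2*\<delta>)/\<delta>\<^sup>2) has_derivative
     (if z \<in> {\<delta><..} then (\<lambda>h. h * (1/z\<^sup>2)) else (\<lambda>h. h * (1/\<delta>\<^sup>2)))) (at z within ({\<delta><..} \<union> {..\<delta>}))"
  proof (rule has_derivative_If_within_closures)
    show "((\<lambda>z. -1/z) has_derivative (\<lambda>h. h * (1/z\<^sup>2))) (at z within {\<delta><..} \<union> (closure {\<delta><..} \<inter> closure {..\<delta>}))"
      if "z \<in> {\<delta><..} \<union> (closure {\<delta><..} \<inter> closure {..\<delta>})"
    proof -
      have "z > 0" using that d by auto
      then have "((\<lambda>z. -1/z) has_real_derivative (1/z\<^sup>2)) (at z)"
        by (auto intro!: derivative_eq_intros simp: field_simps power2_eq_square)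
      moreover have "(*) (1/z\<^sup>2) = (\<lambda>h. h * (1/z\<^sup>2))" by (auto simp: fun_eq_iff)
      ultimately show ?thesis unfolding has_field_derivative_def
        by (metis has_derivative_at_withinI)
    qed
    show "((\<lambda>z. (z - 2*\<delta>)/\<delta>\<^sup>2) has_derivative (\<lambda>h. h * (1/\<delta>\<^sup>2))) (at z within {..\<delta>} \<union> (closure {\<delta><..} \<inter> closure {..\<delta>}))"
    proof -
      have "((\<lambda>z. (z - 2*\<delta>)/\<delta>\<^sup>2) has_real_derivative (1/\<delta>\<^sup>2)) (at z)"
        using d by (auto intro!: derivative_eq_intros simp: field_simps power2_eq_square)
      moreover have "(*) (1/\<delta>\<^sup>2) = (\<lambda>h. h * (1/\<delta>\<^sup>2))" by (auto simp: fun_eq_iff)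
      ultimately show ?thesis unfolding has_field_derivative_def
        by (metis has_derivative_at_withinI)
    qed
    show "-1/z = (z - 2*\<delta>)/\<delta>\<^sup>2" if "z \<in> closure {\<delta><..}" "z \<in> closure {..\<delta>}"
      using that d by (auto simp: field_simps power2_eq_square)
    show "(\<lambda>h. h * (1/z\<^sup>2)) = (\<lambda>h. h * (1/\<delta>\<^sup>2))" if "z \<in> closure {\<delta><..}" "z \<in> closure {..\<delta>}"
      using that d by (auto simp: field_simps power2_eq_square)
  qed auto
  moreover have "{\<delta><..} \<union> {..\<delta>} = (UNIV::real set)" by auto
  moreover have "(\<lambda>z. if z \<in> {\<delta><..} then -1/z else (z - 2*\<delta>)/\<delta>\<^sup>2) = b1 \<delta>"
    by (auto simp: b1_def fun_eq_iff)
  moreover have "(if z \<in> {\<delta><..} then (\<lambda>h. h * (1/z\<^sup>2)) else (\<lambda>h. h * (1/\<delta>\<^sup>2))) = (*) (b2 \<delta> z)"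
    by (auto simp: b2_def fun_eq_iff)
  ultimately show ?thesis
    unfolding has_field_derivative_def by simp
qed

lemma b2_pos: "0 < \<delta> \<Longrightarrow> 0 < b2 \<delta> z"
  by (auto simp: b2_def)

lemma b2_le: "0 < \<delta> \<Longrightarrow> b2 \<delta> z \<le> 1/\<delta>\<^sup>2"
  by (auto simp: b2_def divide_simps power_mono)

lemma b2_ge: "0 < \<delta> \<Longrightarrow> \<delta> \<le> D \<Longrightarrow> z \<le> D \<Longrightarrow> 1/D\<^sup>2 \<le> b2 \<delta> z"
  by (auto simp: b2_def divide_simps power_mono)

lemma b1_mono: "0 < \<delta> \<Longrightarrow> a \<le> b \<Longrightarrow> b1 \<delta> a \<le> b1 \<delta> b"
  by (rule DERIV_nonneg_imp_nondecreasing[of a b]) (auto intro: b1_deriv less_imp_le b2_pos)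

lemma b1_lip:
  assumes d: "0 < \<delta>"
  shows "\<bar>b1 \<delta> a - b1 \<delta> b\<bar> \<le> \<bar>a - b\<bar> / \<delta>\<^sup>2"
proof -
  have *: "b1 \<delta> y - b1 \<delta> x \<le> (y - x) / \<delta>\<^sup>2" if xy: "x < y" for x y
  proof -
    obtain z where "b1 \<delta> y - b1 \<delta> x = (y - x) * b2 \<delta> z"
      using MVT2[of x y "b1 \<delta>" "b2 \<delta>"] xy b1_deriv[OF d] by metis
    moreover have "(y - x) * b2 \<delta> z \<le> (y - x) * (1/\<delta>\<^sup>2)"
      using xy b2_le[OF d] by (intro mult_left_mono) auto
    ultimately show ?thesis by simp
  qed
  show ?thesis
    using *[of a b] *[of b a] b1_mono[OF d, of a b] b1_mono[OF d, of b a]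
    by (cases a b rule: linorder_cases) (auto simp: abs_if)
qed

lemma rb_convex: "0 < \<delta> \<Longrightarrow> convex_on UNIV (relaxed_barrier \<delta>)"
  by (rule convex_on_realI[where f'="b1 \<delta>"]) (auto intro: rb_deriv b1_mono)

lemma taylor_nonneg:
  fixes f fd fdd :: "real \<Rightarrow> real"
  assumes d1: "\<And>t. (f has_real_derivative fd t) (at t)"
    and d2: "\<And>t. (fd has_real_derivative fdd t) (at t)"
    and p: "\<And>t. 0 \<le> fdd t" and f0: "f 0 = 0" and fd0: "fd 0 = 0"
  shows "0 \<le> f s"
proof (cases "0 \<le> s")
  case True
  have ex: "\<And>x. \<exists>y. (fd has_real_derivative y) (at x) \<and> 0 \<le> y" using d2 p by blast
  have "fd t \<ge> 0" if "0 \<le> t" for t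
    using DERIV_nonneg_imp_nondecreasing[of 0 t fd] that ex fd0 by auto
  then have "f 0 \<le> f s"
    using DERIV_nonneg_imp_nondecreasing[of 0 s f] True d1 by blast
  then show ?thesis using f0 by simp
next
  case False
  have ex: "\<And>x. \<exists>y. (fd has_real_derivative y) (at x) \<and> 0 \<le> y" using d2 p by blast
  have "fd t \<le> 0" if "t \<le> 0" for t
    using DERIV_nonneg_imp_nondecreasing[of t 0 fd] that ex fd0 by auto
  moreover have "((\<lambda>t. - f t) has_real_derivative - fd t) (at t)" for t
    using d1 by (auto intro!: derivative_eq_intros)
  ultimately have "- f s \<le> - f 0"
    using DERIV_nonneg_imp_nondecreasing[of s 0 "\<lambda>t. - f t"] False
    by (metis linorder_not_le neg_0_le_iff_le order_less_imp_le)
  then show ?thesis using f0 by simp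
qed

lemma taylor_upper:
  fixes f fd fdd :: "real \<Rightarrow> real"
  assumes d1: "\<And>t. (f has_real_derivative fd t) (at t)"
    and d2: "\<And>t. (fd has_real_derivative fdd t) (at t)"
    and p: "\<And>t. fdd t \<le> M" and f0: "f 0 = 0" and fd0: "fd 0 = 0"
  shows "f s \<le> M / 2 * s\<^sup>2"
proof -
  have "0 \<le> M/2 * s\<^sup>2 - f s"
  proof (rule taylor_nonneg[where f="\<lambda>s. M / 2 * s\<^sup>2 - f s" and fd="\<lambda>t. M * t - fd t" and fdd="\<lambda>t. M - fdd t"])
    show "((\<lambda>s. M / 2 * s\<^sup>2 - f s) has_real_derivative M * t - fd t) (at t)" for t
      using d1[of t] by (auto intro!: derivative_eq_intros)
    show "((\<lambda>t. M * t - fd t) has_real_derivative M - fdd t) (at t)" for t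
      using d2[of t] by (auto intro!: derivative_eq_intros)
  qed (use p f0 fd0 in auto)
  then show ?thesis by simp
qed

lemma taylor_lower_pos:
  fixes f fd fdd :: "real \<Rightarrow> real"
  assumes d1: "\<And>t. (f has_real_derivative fd t) (at t)"
    and d2: "\<And>t. (fd has_real_derivative fdd t) (at t)"
    and p: "\<And>t. 0 \<le> fdd t" and pm: "\<And>t. \<bar>t\<bar> \<le> 1 \<Longrightarrow> m \<le> fdd t" and m0: "0 \<le> m"
    and f0: "f 0 = 0" and fd0: "fd 0 = 0" and s: "0 \<le> s"
  shows "m / 2 * min (s\<^sup>2) s \<le> f s"
proof -
  have g1: "m * t \<le> fd t" if "0 \<le> t" "t \<le> 1" for t
  proof -
    have "(\<lambda>t. fd t - m * t) 0 \<le> (\<lambda>t. fd t - m * t) t"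
      apply (rule DERIV_nonneg_imp_nondecreasing[OF that(1)])
      subgoal for x
        using that d2[of x] pm[of x] by (auto intro!: exI[of _ "fdd x - m"] derivative_eq_intros)
      done
    then show ?thesis using fd0 by simp
  qed
  have g2: "m / 2 * t\<^sup>2 \<le> f t" if "0 \<le> t" "t \<le> 1" for t
  proof -
    have "(\<lambda>t. f t - m/2 * t\<^sup>2) 0 \<le> (\<lambda>t. f t - m/2 * t\<^sup>2) t"
      apply (rule DERIV_nonneg_imp_nondecreasing[OF that(1)])
      subgoal for x
        using that d1[of x] g1[of x] by (auto intro!: exI[of _ "fd x - m * x"] derivative_eq_intros)
      done
    then show ?thesis using f0 by simp
  qed
  show ?thesis
  proof (cases "s \<le> 1")
    case True
    have "s\<^sup>2 \<le> s" using True s by (simp add: power2_eq_square mult_left_le_one_le)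
    then show ?thesis using g2[OF s True] by (simp add: min_def)
  next
    case False
    have f1m: "m \<le> fd t" if "1 \<le> t" for t
    proof -
      have ex: "\<And>x. \<exists>y. (fd has_real_derivative y) (at x) \<and> 0 \<le> y" using d2 p by blast
      show ?thesis using g1[of 1] DERIV_nonneg_imp_nondecreasing[of 1 t fd] that ex by force
    qed
    have "m \<ge> 0" using m0 .
    have "(\<lambda>t. f t - m/2 * t) 1 \<le> (\<lambda>t. f t - m/2 * t) s"
    proof (rule DERIV_nonneg_imp_nondecreasing[where f="\<lambda>t. f t - m/2 * t"])
      show "1 \<le> s" using False by simp
      show "\<exists>y. ((\<lambda>t. f t - m/2 * t) has_real_derivative y) (at x) \<and> 0 \<le> y" if "1 \<le> x" "x \<le> s" for x
        using d1[of x] f1m[of x] that \<open>m \<ge> 0\<close> by (auto intro!: exI[of _ "fd x - m/2"] derivative_eq_intros)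
    qed
    moreover have "m/2 \<le> f 1" using g2[of 1] by simp
    moreover have "min (s\<^sup>2) s = s" using False by (simp add: min_def power2_eq_square)
    ultimately show ?thesis by simp
  qed
qed

lemma taylor_lower:
  fixes f fd fdd :: "real \<Rightarrow> real"
  assumes d1: "\<And>t. (f has_real_derivative fd t) (at t)"
    and d2: "\<And>t. (fd has_real_derivative fdd t) (at t)"
    and p: "\<And>t. 0 \<le> fdd t" and pm: "\<And>t. \<bar>t\<bar> \<le> 1 \<Longrightarrow> m \<le> fdd t" and m0: "0 \<le> m"
    and f0: "f 0 = 0" and fd0: "fd 0 = 0"
  shows "m / 2 * min (s\<^sup>2) \<bar>s\<bar> \<le> f s"
proof (cases "0 \<le> s")
  case True
  then show ?thesis using taylor_lower_pos[OF assms True] by simp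
next
  case False
  have "m / 2 * min ((-s)\<^sup>2) (-s) \<le> (\<lambda>t. f (-t)) (-s)"
  proof (rule taylor_lower_pos[where fd="\<lambda>t. - fd (-t)" and fdd="\<lambda>t. fdd (-t)"])
    show "((\<lambda>t. f (-t)) has_real_derivative - fd (-t)) (at t)" for t
      using DERIV_mirror[where f=f and x=t and y="fd (-t)"] d1[of "-t"] by simp
    show "((\<lambda>t. - fd (-t)) has_real_derivative fdd (-t)) (at t)" for t
      using DERIV_mirror[where f=fd and x=t and y="fdd (-t)"] d2[of "-t"] by (auto intro!: derivative_eq_intros)
  qed (use p pm f0 fd0 False m0 in auto)
  then show ?thesis using False by simp
qed

definition psi :: "real \<Rightarrow> real \<Rightarrow> real \<Rightarrow> real" where
  "psi \<delta> d s = relaxed_barrier \<delta> (d - s) + ln d - s / d"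

lemma psi_derivs:
  assumes "0 < \<delta>" and dnz: "d \<noteq> 0"
  shows "(psi \<delta> d has_real_derivative (- b1 \<delta> (d - s) - 1/d)) (at s)"
    and "((\<lambda>s. - b1 \<delta> (d - s) - 1/d) has_real_derivative b2 \<delta> (d - s)) (at s)"
proof -
  show "(psi \<delta> d has_real_derivative (- b1 \<delta> (d - s) - 1/d)) (at s)"
  proof -
    have "((\<lambda>s. relaxed_barrier \<delta> (d - s)) has_real_derivative b1 \<delta> (d-s) * (-1)) (at s)"
      by (rule DERIV_chain2[OF rb_deriv[OF assms(1)]]) (auto intro!: derivative_eq_intros)
    then show ?thesis unfolding psi_def using dnz
      by (auto intro!: derivative_eq_intros)
  qed
  show "((\<lambda>s. - b1 \<delta> (d - s) - 1/d) has_real_derivative b2 \<delta> (d - s)) (at s)"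
  proof -
    have "((\<lambda>s. b1 \<delta> (d - s)) has_real_derivative b2 \<delta> (d-s) * (-1)) (at s)"
      by (rule DERIV_chain2[OF b1_deriv[OF assms(1)]]) (auto intro!: derivative_eq_intros)
    then show ?thesis
      by (auto intro!: derivative_eq_intros)
  qed
qed

lemma psi_0:
  assumes "0 < \<delta>" "\<delta> \<le> d"
  shows "psi \<delta> d 0 = 0" and "- b1 \<delta> (d - 0) - 1/d = 0"
  using assms by (auto simp: psi_def relaxed_barrier_def b1_def field_simps power2_eq_square)

lemma psi_upper:
  assumes "0 < \<delta>" "\<delta> \<le> d"
  shows "psi \<delta> d s \<le> s\<^sup>2 / (2 * \<delta>\<^sup>2)"
proof -
  have dnz: "d \<noteq> 0" using assms by auto
  have "psi \<delta> d s \<le> (1/\<delta>\<^sup>2) / 2 * s\<^sup>2"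
    by (rule taylor_upper[OF psi_derivs[OF assms(1) dnz]]) (use b2_le[OF assms(1)] psi_0[OF assms] in auto)
  then show ?thesis by simp
qed

lemma psi_nonneg:
  assumes "0 < \<delta>" "\<delta> \<le> d"
  shows "0 \<le> psi \<delta> d s"
proof -
  have dnz: "d \<noteq> 0" using assms by auto
  show ?thesis by (rule taylor_nonneg[OF psi_derivs[OF assms(1) dnz]]) (use b2_pos[OF assms(1)] psi_0[OF assms] in \<open>auto intro: less_imp_le\<close>)
qed

lemma psi_lower:
  assumes "0 < \<delta>" "\<delta> \<le> d" "d \<le> D"
  shows "(1/(D+1)\<^sup>2) / 2 * min (s\<^sup>2) \<bar>s\<bar> \<le> psi \<delta> d s"
proof -
  have dnz: "d \<noteq> 0" using assms by auto
  show ?thesis by (rule taylor_lower[OF psi_derivs[OF assms(1) dnz]])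
     (use b2_pos[OF assms(1)] psi_0[OF assms(1,2)] assms in \<open>auto intro: less_imp_le b2_ge\<close>)
qed

lemma psi_eq:
  "relaxed_barrier \<delta> (- (c \<bullet> y) + d) + ln d = psi \<delta> d (c \<bullet> y) + (c \<bullet> y) / d"
  by (simp add: psi_def)

lemma diag_mat_mult: "diag_mat v *v z = (\<chi> i. v $ i * z $ i)"
proof -
  have "(\<Sum>j\<in>UNIV. (if i = j then v $ i else 0) * z $ j) = (\<Sum>j\<in>UNIV. if i = j then v $ i * z $ j else 0)" for i
    by (rule sum.cong) auto
  then have "(\<Sum>j\<in>UNIV. (if i = j then v $ i else 0) * z $ j) = v $ i * z $ i" for i
    by simp
  then show ?thesis
    by (simp add: diag_mat_def matrix_vector_mult_def vec_eq_iff)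
qed

lemma transpose_dot: "y \<bullet> (transpose C *v z) = (C *v y) \<bullet> (z::real^'q)"
proof -
  have "y \<bullet> (transpose C *v z) = (z v* C) \<bullet> y" unfolding transpose_matrix_vector by (rule inner_commute)
  also have "\<dots> = z \<bullet> (C *v y)" by (rule dot_lmul_matrix)
  finally show ?thesis by (simp add: inner_commute)
qed

lemma quad_CDC:
  "y \<bullet> ((c *\<^sub>R (transpose C ** diag_mat v ** C)) *v y) = c * (\<Sum>i\<in>UNIV. v $ i * (C $ i \<bullet> y)\<^sup>2)"
proof -
  have "y \<bullet> ((c *\<^sub>R (transpose C ** diag_mat v ** C)) *v y) = c * (y \<bullet> (transpose C *v (diag_mat v *v (C *v y))))"
  proof -
    have "(c *\<^sub>R (transpose C ** diag_mat v ** C)) *v y = c *\<^sub>R (transpose C *v (diag_mat v *v (C *v y)))"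
      by (simp only: scaleR_matrix_vector_assoc matrix_vector_mul_assoc matrix_mul_assoc)
    then show ?thesis by simp
  qed
  also have "\<dots> = c * ((C *v y) \<bullet> (diag_mat v *v (C *v y)))" by (simp only: transpose_dot)
  also have "\<dots> = c * (\<Sum>i\<in>UNIV. v $ i * (C $ i \<bullet> y)\<^sup>2)"
    by (simp add: diag_mat_mult inner_vec_def matrix_vector_mul_component power2_eq_square mult.commute mult.left_commute)
  finally show ?thesis .
qed

lemma center_zero:
  assumes "transpose C *v (\<chi> i. (1 + w $ i) / d $ i) = 0"
  shows "(\<Sum>i\<in>UNIV. (1 + w $ i) * ((C $ i \<bullet> y) / d $ i)) = 0"
proof -
  have "0 = y \<bullet> (transpose C *v (\<chi> i. (1 + w $ i) / d $ i))" using assms by simp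
  also have "\<dots> = (C *v y) \<bullet> (\<chi> i. (1 + w $ i) / d $ i)" by (rule transpose_dot)
  also have "\<dots> = (\<Sum>i\<in>UNIV. (1 + w $ i) * ((C $ i \<bullet> y) / d $ i))"
    by (simp add: inner_vec_def matrix_vector_mul_component mult.commute)
  finally show ?thesis by simp
qed

lemma rec_barrier_psi:
  assumes "transpose C *v (\<chi> i. (1 + w $ i) / d $ i) = 0"
  shows "rec_barrier \<delta> C d w y = (\<Sum>i\<in>UNIV. (1 + w $ i) * psi \<delta> (d $ i) (C $ i \<bullet> y))"
proof -
  have "rec_barrier \<delta> C d w y = (\<Sum>i\<in>UNIV. (1 + w $ i) * psi \<delta> (d $ i) (C $ i \<bullet> y)
        + (1 + w $ i) * ((C $ i \<bullet> y) / d $ i))"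
    unfolding rec_barrier_def by (simp add: psi_def algebra_simps)
  also have "\<dots> = (\<Sum>i\<in>UNIV. (1 + w $ i) * psi \<delta> (d $ i) (C $ i \<bullet> y))"
    using center_zero[OF assms] by (simp add: sum.distrib)
  finally show ?thesis .
qed

lemma rec_barrier_upper:
  assumes "transpose C *v (\<chi> i. (1 + w $ i) / d $ i) = 0"
    and "0 < \<delta>" "\<forall>i. \<delta> \<le> d $ i" "\<forall>i. 0 \<le> w $ i"
  shows "rec_barrier \<delta> C d w y \<le> y \<bullet> (((1 / (2 * \<delta>\<^sup>2)) *\<^sub>R (transpose C ** diag_mat (1 + w) ** C)) *v y)"
proof -
  have "rec_barrier \<delta> C d w y \<le> (\<Sum>i\<in>UNIV. (1 + w $ i) * ((C $ i \<bullet> y)\<^sup>2 / (2 * \<delta>\<^sup>2)))"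
    unfolding rec_barrier_psi[OF assms(1)]
    by (rule sum_mono, rule mult_left_mono) (use assms psi_upper in \<open>auto intro: add_nonneg_nonneg\<close>)
  also have "\<dots> = y \<bullet> (((1 / (2 * \<delta>\<^sup>2)) *\<^sub>R (transpose C ** diag_mat (1 + w) ** C)) *v y)"
    unfolding quad_CDC by (simp add: sum_distrib_left field_simps)
  finally show ?thesis .
qed

lemma rec_barrier_nonneg:
  assumes "transpose C *v (\<chi> i. (1 + w $ i) / d $ i) = 0"
    and "0 < \<delta>" "\<forall>i. \<delta> \<le> d $ i" "\<forall>i. 0 \<le> w $ i"
  shows "0 \<le> rec_barrier \<delta> C d w y"
  unfolding rec_barrier_psi[OF assms(1)]
  by (rule sum_nonneg, rule mult_nonneg_nonneg) (use assms psi_nonneg in \<open>auto intro: add_nonneg_nonneg\<close>)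

lemma rec_barrier_lower:
  assumes "transpose C *v (\<chi> i. (1 + w $ i) / d $ i) = 0"
    and "0 < \<delta>" "\<forall>i. \<delta> \<le> d $ i" "\<forall>i. 0 \<le> w $ i" "\<forall>i. d $ i \<le> D"
  shows "(1/(D+1)\<^sup>2) / 2 * min ((C $ k \<bullet> y)\<^sup>2) \<bar>C $ k \<bullet> y\<bar> \<le> rec_barrier \<delta> C d w y"
proof -
  have "(1/(D+1)\<^sup>2) / 2 * min ((C $ k \<bullet> y)\<^sup>2) \<bar>C $ k \<bullet> y\<bar> \<le> psi \<delta> (d $ k) (C $ k \<bullet> y)"
    using psi_lower assms by blast
  also have "\<dots> \<le> (1 + w $ k) * psi \<delta> (d $ k) (C $ k \<bullet> y)"
    using assms psi_nonneg[of \<delta> "d $ k"] by (simp add: algebra_simps)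
  also have "\<dots> \<le> (\<Sum>i\<in>UNIV. (1 + w $ i) * psi \<delta> (d $ i) (C $ i \<bullet> y))"
    by (rule member_le_sum) (use assms psi_nonneg in \<open>auto intro: mult_nonneg_nonneg add_nonneg_nonneg\<close>)
  finally show ?thesis unfolding rec_barrier_psi[OF assms(1)] .
qed

lemma enum_len: "length (enum_class.enum :: 'N::enum list) = CARD('N)"
  by (simp add: card_UNIV_length_enum)

lemma blk_idx_nth:
  assumes "k < CARD('N::enum)"
  shows "blk_idx (enum_class.enum ! k :: 'N) = k"
proof -
  have d: "distinct (enum_class.enum :: 'N list)" by (rule enum_distinct)
  show ?thesis unfolding blk_idx_def
    by (rule the_equality) (use assms d enum_len[where 'N='N] in \<open>auto simp: nth_eq_iff_index_eq\<close>)
qed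

lemma enum_surj: "\<exists>k < CARD('N::enum). (j::'N) = enum_class.enum ! k"
proof -
  have "j \<in> set (enum_class.enum :: 'N list)" by (simp add: UNIV_enum[symmetric])
  then show ?thesis by (metis in_set_conv_nth enum_len)
qed

lemma card_pos_enum: "0 < CARD('N::enum)"
  by simp

lemma sum_enum: "(\<Sum>j\<in>UNIV. F j) = (\<Sum>k<CARD('N::enum). F (enum_class.enum ! k :: 'N))"
proof -
  have "bij_betw ((!) (enum_class.enum :: 'N list)) {..<CARD('N)} UNIV"
    by (rule bij_betw_nth) (auto simp: enum_distinct enum_len UNIV_enum)
  then show ?thesis by (simp add: sum.reindex_bij_betw)
qed

lemma blk_shift:
  assumes "k < CARD('N)"
  shows "blk (shift_in (U::real^'m^'N::enum) v) k = (if k + 1 < CARD('N) then blk U (k+1) else v)"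
  using assms by (simp add: blk_def shift_in_def blk_idx_nth)

lemma blk_add: "blk (U1 + U2) k = blk U1 k + blk U2 k"
  by (simp add: blk_def)
lemma blk_scale: "blk (c *\<^sub>R U) k = c *\<^sub>R blk U k"
  by (simp add: blk_def)
lemma blk_zero: "blk 0 k = 0"
  by (simp add: blk_def)

lemma norm_sq_blk: "(norm (U::real^'m^'N::enum))\<^sup>2 = (\<Sum>k<CARD('N). (norm (blk U k))\<^sup>2)"
proof -
  have "(norm U)\<^sup>2 = U \<bullet> U" by (simp add: power2_norm_eq_inner)
  also have "\<dots> = (\<Sum>j\<in>UNIV. U $ j \<bullet> U $ j)" by (simp add: inner_vec_def)
  also have "\<dots> = (\<Sum>k<CARD('N). (norm (blk U k))\<^sup>2)"
    by (subst sum_enum) (simp add: blk_def power2_norm_eq_inner)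
  finally show ?thesis .
qed

lemma norm_blk_le: "norm (blk (U::real^'m^'N::enum) k) \<le> norm U"
  unfolding blk_def by (rule Finite_Cartesian_Product.norm_nth_le)

lemma traj_add: "traj A B (x1 + x2) (\<lambda>j. u1 j + u2 j) k = traj A B x1 u1 k + traj A B x2 u2 k"
  by (induction k) (simp_all add: matrix_vector_right_distrib algebra_simps)

lemma traj_scale: "traj A B (c *\<^sub>R x) (\<lambda>j. c *\<^sub>R u j) k = c *\<^sub>R traj A B x u k"
  by (induction k) (simp_all add: matrix_vector_right_distrib matrix_scaleR_vector_ac scaleR_matrix_vector_assoc algebra_simps)

lemma traj_zero: "traj A B 0 (\<lambda>j. 0) k = 0"
  by (induction k) simp_all

lemma traj_cong: "(\<And>j. j < k \<Longrightarrow> u j = u' j) \<Longrightarrow> traj A B x u k = traj A B x u' k"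
  by (induction k) auto

lemma traj_shift: "traj A B (A *v x + B *v u 0) (\<lambda>j. u (Suc j)) k = traj A B x u (Suc k)"
  by (induction k) auto

lemma traj_split: "traj A B x u k = traj A B x (\<lambda>j. 0) k + traj A B 0 u k"
  using traj_add[of A B x 0 "\<lambda>j. 0" u k] by simp

lemma blk_add': "blk (U1 + U2) = (\<lambda>k. blk U1 k + blk U2 k)"
  by (simp add: blk_def fun_eq_iff)
lemma blk_scale': "blk (c *\<^sub>R U) = (\<lambda>k. c *\<^sub>R blk U k)"
  by (simp add: blk_def fun_eq_iff)

lemma traj_add0: "traj A B 0 (\<lambda>j. u1 j + u2 j) k = traj A B 0 u1 k + traj A B 0 u2 k"
  using traj_add[of A B 0 0 u1 u2 k] by simp
lemma traj_scale0: "traj A B 0 (\<lambda>j. c *\<^sub>R u j) k = c *\<^sub>R traj A B 0 u k"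
  using traj_scale[of A B c 0 u k] by simp
lemma traj_addx: "traj A B (x1 + x2) (\<lambda>j. 0) k = traj A B x1 (\<lambda>j. 0) k + traj A B x2 (\<lambda>j. 0) k"
  using traj_add[of A B x1 x2 "\<lambda>j. 0" "\<lambda>j. 0" k] by simp
lemma traj_scalex: "traj A B (c *\<^sub>R x) (\<lambda>j. 0) k = c *\<^sub>R traj A B x (\<lambda>j. 0) k"
  using traj_scale[of A B c x "\<lambda>j. 0" k] by simp

lemma linear_traj_U: "linear (\<lambda>U::real^'m^'N::enum. traj A B 0 (blk U) k)"
  by (rule linearI) (simp_all add: blk_add' blk_scale' traj_add0 traj_scale0)

lemma linear_traj_x: "linear (\<lambda>x. traj A B x (\<lambda>j. 0) k)"
  by (rule linearI) (simp_all add: traj_addx traj_scalex)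

lemma linear_traj_Ux: "linear (\<lambda>w::(real^'m^'N::enum) \<times> (real^'n). traj A B (snd w) (blk (fst w)) k)"
  by (rule linearI) (simp_all add: blk_add' blk_scale' traj_add traj_scale)

lemma quad_transpose:
  "y \<bullet> ((transpose M ** S ** M) *v y) = (M *v y) \<bullet> (S *v (M *v (y::real^'n)))"
proof -
  have "(transpose M ** S ** M) *v y = transpose M *v (S *v (M *v y))"
    by (simp only: matrix_vector_mul_assoc matrix_mul_assoc)
  then show ?thesis by (simp only: transpose_dot)
qed

lemma terminal_ineq:
  fixes A :: "real^'n^'n" and B :: "real^'m^'n"
    and Cx :: "real^'n^'qx::finite" and dx :: "real^'qx"
    and Cu :: "real^'m^'qu::finite" and du :: "real^'qu"
    and Q P :: "real^'n^'n" and R :: "real^'m^'m"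
    and \<epsilon> \<delta> :: real and wx :: "real^'qx" and wu :: "real^'qu"
    and K :: "real^'n^'m"
  assumes eps: "\<epsilon> \<ge> 0" and delta_pos: "0 < \<delta>"
    and delta_x: "\<forall>i. \<delta> \<le> dx $ i" and delta_u: "\<forall>j. \<delta> \<le> du $ j"
    and wx_nn: "\<forall>i. 0 \<le> wx $ i" and wu_nn: "\<forall>j. 0 \<le> wu $ j"
    and wx_cent: "transpose Cx *v (\<chi> i. (1 + wx $ i) / dx $ i) = 0"
    and wu_cent: "transpose Cu *v (\<chi> j. (1 + wu $ j) / du $ j) = 0"
    and Ric: "P = transpose (A + B ** K) ** P ** (A + B ** K)
                 + transpose K ** (R + \<epsilon> *\<^sub>R ((1 / (2 * \<delta>\<^sup>2)) *\<^sub>R (transpose Cu ** diag_mat (1 + wu) ** Cu))) ** K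
                 + Q + \<epsilon> *\<^sub>R ((1 / (2 * \<delta>\<^sup>2)) *\<^sub>R (transpose Cx ** diag_mat (1 + wx) ** Cx))"
  shows "stage_cost Q R \<epsilon> \<delta> Cx dx wx Cu du wu y (K *v y)
          + (A *v y + B *v (K *v y)) \<bullet> (P *v (A *v y + B *v (K *v y))) \<le> y \<bullet> (P *v y)"
proof -
  define Mx where "Mx = (1 / (2 * \<delta>\<^sup>2)) *\<^sub>R (transpose Cx ** diag_mat (1 + wx) ** Cx)"
  define Mu where "Mu = (1 / (2 * \<delta>\<^sup>2)) *\<^sub>R (transpose Cu ** diag_mat (1 + wu) ** Cu)"
  define F where "F = A + B ** K"
  have ric: "P = transpose F ** P ** F + transpose K ** (R + \<epsilon> *\<^sub>R Mu) ** K + Q + \<epsilon> *\<^sub>R Mx"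
    using Ric unfolding Mx_def Mu_def F_def .
  have Fy: "F *v y = A *v y + B *v (K *v y)"
    by (simp add: F_def matrix_vector_mult_add_rdistrib matrix_vector_mul_assoc)
  have "P *v y = (transpose F ** P ** F + transpose K ** (R + \<epsilon> *\<^sub>R Mu) ** K + Q + \<epsilon> *\<^sub>R Mx) *v y"
    by (rule arg_cong[where f="\<lambda>M. M *v y"]) (rule ric)
  then have "y \<bullet> (P *v y) = y \<bullet> ((transpose F ** P ** F) *v y) + y \<bullet> ((transpose K ** (R + \<epsilon> *\<^sub>R Mu) ** K) *v y)
      + y \<bullet> (Q *v y) + y \<bullet> ((\<epsilon> *\<^sub>R Mx) *v y)"
    by (simp only: matrix_vector_mult_add_rdistrib inner_add_right)
  also have "\<dots> = (F *v y) \<bullet> (P *v (F *v y)) + (K *v y) \<bullet> (R *v (K *v y)) + \<epsilon> * ((K *v y) \<bullet> (Mu *v (K *v y)))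
      + y \<bullet> (Q *v y) + \<epsilon> * (y \<bullet> (Mx *v y))"
    by (simp only: quad_transpose matrix_vector_mult_add_rdistrib inner_add_right
        scaleR_matrix_vector_assoc[symmetric] inner_scaleR_right)
  finally have eq: "y \<bullet> (P *v y) = (F *v y) \<bullet> (P *v (F *v y)) + (K *v y) \<bullet> (R *v (K *v y)) + \<epsilon> * ((K *v y) \<bullet> (Mu *v (K *v y)))
      + y \<bullet> (Q *v y) + \<epsilon> * (y \<bullet> (Mx *v y))" .
  have bx: "rec_barrier \<delta> Cx dx wx y \<le> y \<bullet> (Mx *v y)"
    unfolding Mx_def using rec_barrier_upper[OF wx_cent delta_pos delta_x wx_nn] .
  have bu: "rec_barrier \<delta> Cu du wu (K *v y) \<le> (K *v y) \<bullet> (Mu *v (K *v y))"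
    unfolding Mu_def using rec_barrier_upper[OF wu_cent delta_pos delta_u wu_nn] .
  have "\<epsilon> * rec_barrier \<delta> Cx dx wx y \<le> \<epsilon> * (y \<bullet> (Mx *v y))" using bx eps by (rule mult_left_mono)
  moreover have "\<epsilon> * rec_barrier \<delta> Cu du wu (K *v y) \<le> \<epsilon> * ((K *v y) \<bullet> (Mu *v (K *v y)))" using bu eps by (rule mult_left_mono)
  ultimately show ?thesis unfolding eq Fy[symmetric] stage_cost_def by linarith
qed

lemma decrease:
  fixes A :: "real^'n^'n" and B :: "real^'m^'n"
    and Cx :: "real^'n^'qx::finite" and dx :: "real^'qx"
    and Cu :: "real^'m^'qu::finite" and du :: "real^'qu"
    and Q P :: "real^'n^'n" and R :: "real^'m^'m"
    and \<epsilon> \<delta> :: real and wx :: "real^'qx" and wu :: "real^'qu"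
    and K :: "real^'n^'m" and U :: "real^'m^'N::enum"
  assumes tmi: "\<And>y. stage_cost Q R \<epsilon> \<delta> Cx dx wx Cu du wu y (K *v y)
          + (A *v y + B *v (K *v y)) \<bullet> (P *v (A *v y + B *v (K *v y))) \<le> y \<bullet> (P *v y)"
  shows "mpc_cost A B Q R P \<epsilon> \<delta> Cx dx wx Cu du wu (shift_in U (K *v traj A B x (blk U) CARD('N))) (A *v x + B *v blk U 0)
             - mpc_cost A B Q R P \<epsilon> \<delta> Cx dx wx Cu du wu U x
             \<le> - stage_cost Q R \<epsilon> \<delta> Cx dx wx Cu du wu x (blk U 0)"
proof -
  define N where "N = CARD('N)"
  have N0: "0 < N" unfolding N_def by simp
  define v where "v = K *v traj A B x (blk U) N"
  define u' where "u' = (\<lambda>j. if j < N then blk U j else v)"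
  define Up where "Up = shift_in U v"
  define lc where "lc = stage_cost Q R \<epsilon> \<delta> Cx dx wx Cu du wu"
  define Tm where "Tm = (\<lambda>y. y \<bullet> (P *v y))"
  have h1: "blk Up k = u' (Suc k)" if "k < N" for k
    using that blk_shift[of k U v] unfolding Up_def u'_def N_def by auto
  have h2: "traj A B (A *v x + B *v blk U 0) (blk Up) k = traj A B x u' (Suc k)" if "k \<le> N" for k
  proof -
    have "traj A B (A *v x + B *v blk U 0) (blk Up) k = traj A B (A *v x + B *v u' 0) (\<lambda>j. u' (Suc j)) k"
      using N0 that h1 by (auto simp: u'_def intro!: traj_cong)
    also have "\<dots> = traj A B x u' (Suc k)" by (rule traj_shift)
    finally show ?thesis .
  qed
  have h3: "traj A B x (blk U) k = traj A B x u' k" if "k \<le> N" for k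
    using that by (auto simp: u'_def intro!: traj_cong)
  define G where "G = (\<lambda>k. lc (traj A B x u' k) (u' k))"
  have J1: "mpc_cost A B Q R P \<epsilon> \<delta> Cx dx wx Cu du wu Up (A *v x + B *v blk U 0)
       = (\<Sum>k<N. G (Suc k)) + Tm (traj A B x u' (Suc N))"
  proof -
    have "(\<Sum>k<N. lc (traj A B (A *v x + B *v blk U 0) (blk Up) k) (blk Up k)) = (\<Sum>k<N. G (Suc k))"
      by (rule sum.cong) (use h1 h2 in \<open>auto simp: G_def simp del: traj.simps\<close>)
    moreover have "traj A B (A *v x + B *v blk U 0) (blk Up) N = traj A B x u' (Suc N)"
      using h2 by (simp del: traj.simps)
    ultimately show ?thesis
      unfolding mpc_cost_def N_def[symmetric] lc_def[symmetric] Tm_def by simp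
  qed
  have J0: "mpc_cost A B Q R P \<epsilon> \<delta> Cx dx wx Cu du wu U x = (\<Sum>k<N. G k) + Tm (traj A B x u' N)"
  proof -
    have "(\<Sum>k<N. lc (traj A B x (blk U) k) (blk U k)) = (\<Sum>k<N. G k)"
      by (rule sum.cong) (use h3 in \<open>auto simp: G_def u'_def simp del: traj.simps\<close>)
    then show ?thesis
      unfolding mpc_cost_def N_def[symmetric] lc_def[symmetric] Tm_def using h3 by simp
  qed
  have S: "(\<Sum>k<N. G (Suc k)) = (\<Sum>k<N. G k) + G N - G 0"
    using sum.lessThan_Suc_shift[of G N] sum.lessThan_Suc[of G N] by simp
  have xN: "traj A B x u' N = traj A B x (blk U) N" using h3 by simp
  have GN: "G N = lc (traj A B x (blk U) N) (K *v traj A B x (blk U) N)"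
    unfolding G_def xN by (simp add: u'_def v_def)
  have xN1: "traj A B x u' (Suc N) = A *v traj A B x (blk U) N + B *v (K *v traj A B x (blk U) N)"
    using xN by (simp add: u'_def v_def)
  have G0: "G 0 = lc x (blk U 0)" using N0 by (simp add: G_def u'_def)
  have "G N + Tm (traj A B x u' (Suc N)) \<le> Tm (traj A B x u' N)"
    unfolding GN xN1 xN Tm_def lc_def by (rule tmi)
  then show ?thesis
    unfolding Up_def[symmetric] v_def[symmetric] N_def[symmetric] J1 J0 S G0[symmetric] lc_def[symmetric]
    unfolding v_def N_def by linarith
qed

lemma pd_lower:
  fixes R :: "real^'m^'m"
  assumes "pd_mat R"
  shows "\<exists>l>0. \<forall>h. l * (norm h)\<^sup>2 \<le> h \<bullet> (R *v h)"
proof -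
  let ?S = "sphere (0::real^'m) 1"
  obtain e :: "real^'m" where "norm e = 1" using vector_choose_size[of 1] by auto
  then have ne: "?S \<noteq> {}" by auto
  have cont: "continuous_on ?S (\<lambda>h. h \<bullet> (R *v h))"
    by (intro continuous_on_inner continuous_on_id linear_continuous_on)
       (simp add: linear_conv_bounded_linear[symmetric])
  obtain u where u: "u \<in> ?S" and umin: "\<forall>y\<in>?S. u \<bullet> (R *v u) \<le> y \<bullet> (R *v y)"
    using continuous_attains_inf[OF compact_sphere ne cont] by blast
  have "u \<noteq> 0" using u by auto
  then have pos: "0 < u \<bullet> (R *v u)" using assms by (auto simp: pd_mat_def)
  have "u \<bullet> (R *v u) * (norm h)\<^sup>2 \<le> h \<bullet> (R *v h)" for h
  proof (cases "h = 0")
    case True then show ?thesis by simp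
  next
    case False
    define s where "s = inverse (norm h)"
    have "s *\<^sub>R h \<in> ?S" using False by (simp add: s_def)
    then have "u \<bullet> (R *v u) \<le> (s *\<^sub>R h) \<bullet> (R *v (s *\<^sub>R h))" using umin by blast
    also have "\<dots> = s\<^sup>2 * (h \<bullet> (R *v h))"
      by (simp add: matrix_scaleR_vector_ac scaleR_matrix_vector_assoc[symmetric] power2_eq_square)
    finally have "u \<bullet> (R *v u) \<le> s\<^sup>2 * (h \<bullet> (R *v h))" .
    then have "u \<bullet> (R *v u) * (norm h)\<^sup>2 \<le> (s\<^sup>2 * (h \<bullet> (R *v h))) * (norm h)\<^sup>2"
      by (rule mult_right_mono) simp
    also have "\<dots> = s\<^sup>2 * (norm h)\<^sup>2 * (h \<bullet> (R *v h))" by (simp only: ac_simps)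
    also have "s\<^sup>2 * (norm h)\<^sup>2 = 1" using False by (simp add: s_def power2_eq_square field_simps)
    finally show ?thesis by simp
  qed
  then show ?thesis using pos by blast
qed

lemma sym_mat_adj: "sym_mat M \<Longrightarrow> a \<bullet> (M *v b) = (M *v a) \<bullet> (b::real^'n)"
  using transpose_dot[of a M b] by (simp add: sym_mat_def)

lemma quad_convex:
  fixes M :: "'a::real_inner \<Rightarrow> 'a"
  assumes lin: "linear M" and sym: "\<And>a b. a \<bullet> M b = M a \<bullet> b" and psd: "\<And>h. 0 \<le> h \<bullet> M h"
  shows "convex_on UNIV (\<lambda>y. y \<bullet> M y)"
proof (rule convex_onI)
  fix t :: real and x y :: 'a
  assume t: "0 < t" "t < 1"
  interpret M: linear M by (rule lin)
  have d: "0 \<le> (x - y) \<bullet> M (x - y)" by (rule psd)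
  have s: "x \<bullet> M y = y \<bullet> M x" using sym[of x y] by (simp add: inner_commute)
  have "(1 - t) * (x \<bullet> M x) + t * (y \<bullet> M y) - ((1 - t) *\<^sub>R x + t *\<^sub>R y) \<bullet> M ((1 - t) *\<^sub>R x + t *\<^sub>R y)
      = t * (1 - t) * ((x - y) \<bullet> M (x - y))"
    by (simp add: M.add M.scale M.diff inner_add_left inner_add_right inner_diff_left inner_diff_right s algebra_simps)
  also have "\<dots> \<ge> 0" using t d by simp
  finally show "((1 - t) *\<^sub>R x + t *\<^sub>R y) \<bullet> M ((1 - t) *\<^sub>R x + t *\<^sub>R y) \<le> (1 - t) * (x \<bullet> M x) + t * (y \<bullet> M y)"
    by simp
qed simp

lemma convex_affine_comp:
  fixes f :: "'b::real_vector \<Rightarrow> real" and T :: "'a::real_vector \<Rightarrow> 'b"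
  assumes f: "convex_on UNIV f" and T: "linear T"
  shows "convex_on UNIV (\<lambda>x. f (T x + c))"
proof (rule convex_onI)
  fix t :: real and x y :: 'a
  assume t: "0 < t" "t < 1"
  interpret T: linear T by (rule T)
  have "T ((1 - t) *\<^sub>R x + t *\<^sub>R y) = (1 - t) *\<^sub>R T x + t *\<^sub>R T y"
    by (simp only: T.add T.scale)
  moreover have "(1 - t) *\<^sub>R (T x + c) + t *\<^sub>R (T y + c) = (1 - t) *\<^sub>R T x + t *\<^sub>R T y + c"
    by (simp add: algebra_simps)
  ultimately have "T ((1 - t) *\<^sub>R x + t *\<^sub>R y) + c = (1 - t) *\<^sub>R (T x + c) + t *\<^sub>R (T y + c)"
    by simp
  then show "f (T ((1 - t) *\<^sub>R x + t *\<^sub>R y) + c) \<le> (1 - t) * f (T x + c) + t * f (T y + c)"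
    using convex_onD[OF f, of t "T x + c" "T y + c"] t by simp
qed simp

lemma convex_sum_fun:
  assumes "finite I" "\<And>i. i \<in> I \<Longrightarrow> convex_on UNIV (f i)"
  shows "convex_on UNIV (\<lambda>x. \<Sum>i\<in>I. f i x)"
  using assms
proof (induction I rule: finite_induct)
  case empty then show ?case by (simp add: convex_on_const)
next
  case (insert i I)
  then show ?case by (simp add: convex_on_add)
qed

lemma barrier_convex:
  assumes "0 < \<delta>"
  shows "convex_on UNIV (\<lambda>y::'a::real_inner. relaxed_barrier \<delta> (a \<bullet> y + e))"
proof -
  have "linear (\<lambda>y::'a. a \<bullet> y)" by (rule bounded_linear_inner_right[THEN bounded_linear.linear])
  then show ?thesis using convex_affine_comp[OF rb_convex[OF assms]] by blast
qed

lemma rec_barrier_convex: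
  assumes "0 < \<delta>" "\<forall>i. 0 \<le> w $ i"
  shows "convex_on UNIV (rec_barrier \<delta> C d w)"
proof -
  have "convex_on UNIV (\<lambda>y. \<Sum>i\<in>UNIV. (1 + w $ i) * (relaxed_barrier \<delta> ((- C $ i) \<bullet> y + d $ i) + ln (d $ i)))"
  proof (rule convex_sum_fun)
    fix i
    have "convex_on UNIV (\<lambda>y. relaxed_barrier \<delta> ((- C $ i) \<bullet> y + d $ i) + ln (d $ i))"
      by (rule convex_on_add[OF barrier_convex[OF assms(1)]]) (simp add: convex_on_const)
    then show "convex_on UNIV (\<lambda>y. (1 + w $ i) * (relaxed_barrier \<delta> ((- C $ i) \<bullet> y + d $ i) + ln (d $ i)))"
      using assms(2) by (intro convex_on_cmul) (auto intro: add_nonneg_nonneg)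
  qed simp
  then show ?thesis unfolding rec_barrier_def by simp
qed

lemma mat_quad_convex:
  fixes Q :: "real^'n^'n"
  assumes "psd_mat Q"
  shows "convex_on UNIV (\<lambda>y. y \<bullet> (Q *v y))"
proof -
  have "convex_on UNIV (\<lambda>y. y \<bullet> ((*v) Q y))"
    by (rule quad_convex) (use assms in \<open>auto simp: psd_mat_def sym_mat_adj\<close>)
  then show ?thesis by simp
qed

lemma pd_psd: "pd_mat M \<Longrightarrow> psd_mat M"
  unfolding pd_mat_def psd_mat_def by (metis inner_zero_left matrix_vector_mult_0_right order_le_less)

lemma norm_sq_identity:
  fixes x y :: "'a::real_inner"
  shows "(1 - t) * (norm x)\<^sup>2 + t * (norm y)\<^sup>2 - (norm ((1 - t) *\<^sub>R x + t *\<^sub>R y))\<^sup>2 = t * (1 - t) * (norm (x - y))\<^sup>2"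
  by (simp add: power2_norm_eq_inner inner_add_left inner_add_right inner_diff_left inner_diff_right
      inner_commute[of y x] algebra_simps)

lemma strongly_convexI:
  fixes f :: "'a::real_inner \<Rightarrow> real"
  assumes l: "0 < l" and c: "convex_on UNIV (\<lambda>x. f x - l * (norm x)\<^sup>2)"
  shows "strongly_convex_on UNIV f"
  unfolding strongly_convex_on_def
proof (intro exI[of _ "2 * l"] conjI ballI)
  fix x y :: 'a and t :: real
  assume t: "t \<in> {0..1}"
  have "f ((1 - t) *\<^sub>R x + t *\<^sub>R y) - l * (norm ((1 - t) *\<^sub>R x + t *\<^sub>R y))\<^sup>2
      \<le> (1 - t) * (f x - l * (norm x)\<^sup>2) + t * (f y - l * (norm y)\<^sup>2)"
    using convex_onD[OF c, of t x y] t by simp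
  moreover have "l * ((1 - t) * (norm x)\<^sup>2 + t * (norm y)\<^sup>2 - (norm ((1 - t) *\<^sub>R x + t *\<^sub>R y))\<^sup>2)
     = l * (t * (1 - t) * (norm (x - y))\<^sup>2)" by (simp only: norm_sq_identity)
  ultimately show "f ((1 - t) *\<^sub>R x + t *\<^sub>R y) \<le> (1 - t) * f x + t * f y - 2 * l / 2 * t * (1 - t) * (norm (x - y))\<^sup>2"
    by (simp add: algebra_simps)
qed (use l in simp)

definition good :: "('a::euclidean_space \<Rightarrow> real) \<Rightarrow> ('a \<Rightarrow> 'a) \<Rightarrow> ('a \<Rightarrow> 'a \<Rightarrow> 'a) \<Rightarrow> real \<Rightarrow> real \<Rightarrow> bool" where
  "good f g H s L \<longleftrightarrow> 0 \<le> s \<and> 0 \<le> L \<and>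
     (\<forall>U. (f has_derivative (\<lambda>h. g U \<bullet> h)) (at U) \<and> (g has_derivative H U) (at U)
        \<and> (\<forall>h. s * (norm h)\<^sup>2 \<le> h \<bullet> H U h \<and> h \<bullet> H U h \<le> L * (norm h)\<^sup>2))
     \<and> (\<forall>U1 U2. norm (g U1 - g U2) \<le> L * norm (U1 - U2))"

lemma good_add:
  assumes "good f1 g1 H1 s1 L1" "good f2 g2 H2 s2 L2"
  shows "good (\<lambda>U. f1 U + f2 U) (\<lambda>U. g1 U + g2 U) (\<lambda>U h. H1 U h + H2 U h) (s1 + s2) (L1 + L2)"
  unfolding good_def
proof (intro conjI allI)
  show "0 \<le> s1 + s2" "0 \<le> L1 + L2" using assms by (auto simp: good_def)
next
  fix U
  show "((\<lambda>U. f1 U + f2 U) has_derivative (\<lambda>h. (g1 U + g2 U) \<bullet> h)) (at U)"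
    using assms unfolding good_def
    by (auto intro!: has_derivative_eq_rhs[OF has_derivative_add] simp: inner_add_left fun_eq_iff)
  show "((\<lambda>U. g1 U + g2 U) has_derivative (\<lambda>h. H1 U h + H2 U h)) (at U)"
    using assms unfolding good_def by (auto intro!: has_derivative_add)
  fix h
  have a1: "s1 * (norm h)\<^sup>2 \<le> h \<bullet> H1 U h" "h \<bullet> H1 U h \<le> L1 * (norm h)\<^sup>2"
    using assms(1) unfolding good_def by blast+
  have a2: "s2 * (norm h)\<^sup>2 \<le> h \<bullet> H2 U h" "h \<bullet> H2 U h \<le> L2 * (norm h)\<^sup>2"
    using assms(2) unfolding good_def by blast+
  show "(s1 + s2) * (norm h)\<^sup>2 \<le> h \<bullet> (H1 U h + H2 U h)"
    using a1(1) a2(1) by (simp add: inner_add_right distrib_right)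
  show "h \<bullet> (H1 U h + H2 U h) \<le> (L1 + L2) * (norm h)\<^sup>2"
    using a1(2) a2(2) by (simp add: inner_add_right distrib_right)
next
  fix U1 U2
  have "norm (g1 U1 + g2 U1 - (g1 U2 + g2 U2)) \<le> norm (g1 U1 - g1 U2) + norm (g2 U1 - g2 U2)"
    by (metis add_diff_add norm_triangle_ineq)
  moreover have "norm (g1 U1 - g1 U2) \<le> L1 * norm (U1 - U2)" "norm (g2 U1 - g2 U2) \<le> L2 * norm (U1 - U2)"
    using assms unfolding good_def by blast+
  ultimately show "norm (g1 U1 + g2 U1 - (g1 U2 + g2 U2)) \<le> (L1 + L2) * norm (U1 - U2)"
    by (simp add: distrib_right)
qed

lemma good_const: "good (\<lambda>U. c) (\<lambda>U. 0) (\<lambda>U h. 0) 0 0"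
  unfolding good_def by (auto intro!: has_derivative_eq_rhs[OF has_derivative_const] simp: fun_eq_iff)

lemma good_cmul:
  assumes "good f g H s L" "0 \<le> c"
  shows "good (\<lambda>U. c * f U) (\<lambda>U. c *\<^sub>R g U) (\<lambda>U h. c *\<^sub>R H U h) (c * s) (c * L)"
  unfolding good_def
proof (intro conjI allI)
  show "0 \<le> c * s" "0 \<le> c * L" using assms by (auto simp: good_def)
next
  fix U
  show "((\<lambda>U. c * f U) has_derivative (\<lambda>h. c *\<^sub>R g U \<bullet> h)) (at U)"
    using assms unfolding good_def
    by (auto intro!: has_derivative_eq_rhs[OF has_derivative_mult_right] simp: fun_eq_iff)
  show "((\<lambda>U. c *\<^sub>R g U) has_derivative (\<lambda>h. c *\<^sub>R H U h)) (at U)"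
    using assms unfolding good_def by (auto intro!: has_derivative_scaleR_right)
  fix h
  have "s * (norm h)\<^sup>2 \<le> h \<bullet> H U h" "h \<bullet> H U h \<le> L * (norm h)\<^sup>2" using assms by (auto simp: good_def)
  then show "c * s * (norm h)\<^sup>2 \<le> h \<bullet> c *\<^sub>R H U h" "h \<bullet> c *\<^sub>R H U h \<le> c * L * (norm h)\<^sup>2"
    using assms(2) by (auto simp: mult.assoc intro: mult_left_mono)
next
  fix U1 U2
  have "norm (g U1 - g U2) \<le> L * norm (U1 - U2)" using assms by (auto simp: good_def)
  then have "c * norm (g U1 - g U2) \<le> c * (L * norm (U1 - U2))" using assms(2) by (rule mult_left_mono)
  then show "norm (c *\<^sub>R g U1 - c *\<^sub>R g U2) \<le> c * L * norm (U1 - U2)"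
    using assms(2) by (simp add: scaleR_diff_right[symmetric] mult.assoc)
qed

lemma good_mono:
  assumes "good f g H s L" "L \<le> L'"
  shows "good f g H s L'"
  unfolding good_def
proof (intro conjI allI)
  show "0 \<le> s" "0 \<le> L'" using assms by (auto simp: good_def)
  fix U
  show "(f has_derivative (\<lambda>h. g U \<bullet> h)) (at U)" "(g has_derivative H U) (at U)"
    using assms by (auto simp: good_def)
  fix h
  show "s * (norm h)\<^sup>2 \<le> h \<bullet> H U h" using assms by (auto simp: good_def)
  have "h \<bullet> H U h \<le> L * (norm h)\<^sup>2" using assms unfolding good_def by blast
  also have "\<dots> \<le> L' * (norm h)\<^sup>2" using assms(2) by (rule mult_right_mono) simp
  finally show "h \<bullet> H U h \<le> L' * (norm h)\<^sup>2" .
next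
  fix U1 U2
  have "norm (g U1 - g U2) \<le> L * norm (U1 - U2)" using assms unfolding good_def by blast
  also have "\<dots> \<le> L' * norm (U1 - U2)" using assms(2) by (rule mult_right_mono) simp
  finally show "norm (g U1 - g U2) \<le> L' * norm (U1 - U2)" .
qed

lemma good_comp:
  fixes \<phi> :: "'b::euclidean_space \<Rightarrow> real" and T :: "'a::euclidean_space \<Rightarrow> 'b"
  assumes gd: "good \<phi> g H s L" and lin: "linear T"
  shows "good (\<lambda>U. \<phi> (T U + c)) (\<lambda>U. adjoint T (g (T U + c))) (\<lambda>U h. adjoint T (H (T U + c) (T h))) 0
           (L * (onorm T)\<^sup>2 + L * onorm T * onorm (adjoint T))"
proof -
  have blT: "bounded_linear T" using lin by (simp add: linear_conv_bounded_linear)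
  have linA: "linear (adjoint T)" using lin by (rule adjoint_linear)
  have blA: "bounded_linear (adjoint T)" using linA by (simp add: linear_conv_bounded_linear)
  have s0: "0 \<le> s" and L0: "0 \<le> L" using gd by (auto simp: good_def)
  have K0: "0 \<le> onorm T" using blT by (rule onorm_pos_le)
  have K'0: "0 \<le> onorm (adjoint T)" using blA by (rule onorm_pos_le)
  have affd: "((\<lambda>U. T U + c) has_derivative T) (at U)" for U
    using blT by (auto intro!: derivative_eq_intros bounded_linear_imp_has_derivative)
  show ?thesis
    unfolding good_def
  proof (intro conjI allI)
    show "0 \<le> (0::real)" by simp
    show "0 \<le> L * (onorm T)\<^sup>2 + L * onorm T * onorm (adjoint T)"
      using L0 K0 K'0 by simp
  next
    fix U
    have "((\<lambda>U. \<phi> (T U + c)) has_derivative (\<lambda>h. g (T U + c) \<bullet> T h)) (at U)"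
      using has_derivative_compose[OF affd] gd unfolding good_def by blast
    then show "((\<lambda>U. \<phi> (T U + c)) has_derivative (\<lambda>h. adjoint T (g (T U + c)) \<bullet> h)) (at U)"
      by (rule has_derivative_eq_rhs) (simp add: fun_eq_iff adjoint_clauses(2)[OF lin])
    have "((\<lambda>U. g (T U + c)) has_derivative (\<lambda>h. H (T U + c) (T h))) (at U)"
      using has_derivative_compose[OF affd] gd unfolding good_def by blast
    then show "((\<lambda>U. adjoint T (g (T U + c))) has_derivative (\<lambda>h. adjoint T (H (T U + c) (T h)))) (at U)"
      by (rule bounded_linear.has_derivative[OF blA])
    fix h
    have eq: "h \<bullet> adjoint T (H (T U + c) (T h)) = T h \<bullet> H (T U + c) (T h)"
      by (simp add: adjoint_clauses(1)[OF lin])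
    show "0 * (norm h)\<^sup>2 \<le> h \<bullet> adjoint T (H (T U + c) (T h))"
      unfolding eq using gd s0 unfolding good_def by (smt (verit) mult_nonneg_nonneg zero_le_power2)
    have "T h \<bullet> H (T U + c) (T h) \<le> L * (norm (T h))\<^sup>2" using gd unfolding good_def by blast
    also have "\<dots> \<le> L * (onorm T * norm h)\<^sup>2"
      using L0 onorm[OF blT, of h] by (intro mult_left_mono power_mono) auto
    also have "\<dots> \<le> (L * (onorm T)\<^sup>2 + L * onorm T * onorm (adjoint T)) * (norm h)\<^sup>2"
      using L0 K0 K'0 by (simp add: power_mult_distrib algebra_simps)
    finally show "h \<bullet> adjoint T (H (T U + c) (T h)) \<le> (L * (onorm T)\<^sup>2 + L * onorm T * onorm (adjoint T)) * (norm h)\<^sup>2"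
      unfolding eq .
  next
    fix U1 U2
    have "norm (adjoint T (g (T U1 + c)) - adjoint T (g (T U2 + c))) = norm (adjoint T (g (T U1 + c) - g (T U2 + c)))"
      using linA by (simp add: linear_diff)
    also have "\<dots> \<le> onorm (adjoint T) * norm (g (T U1 + c) - g (T U2 + c))" by (rule onorm[OF blA])
    also have "\<dots> \<le> onorm (adjoint T) * (L * norm (T U1 + c - (T U2 + c)))"
    proof (rule mult_left_mono[OF _ K'0])
      show "norm (g (T U1 + c) - g (T U2 + c)) \<le> L * norm (T U1 + c - (T U2 + c))"
        using gd unfolding good_def by blast
    qed
    also have "T U1 + c - (T U2 + c) = T (U1 - U2)" using lin by (simp add: linear_diff)
    also have "onorm (adjoint T) * (L * norm (T (U1 - U2))) \<le> onorm (adjoint T) * (L * (onorm T * norm (U1 - U2)))"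
      using onorm[OF blT, of "U1 - U2"] K'0 L0 by (intro mult_left_mono) auto
    also have "\<dots> \<le> (L * (onorm T)\<^sup>2 + L * onorm T * onorm (adjoint T)) * norm (U1 - U2)"
      using L0 K0 K'0 by (simp add: algebra_simps power2_eq_square mult_nonneg_nonneg)
    finally show "norm (adjoint T (g (T U1 + c)) - adjoint T (g (T U2 + c)))
        \<le> (L * (onorm T)\<^sup>2 + L * onorm T * onorm (adjoint T)) * norm (U1 - U2)" .
  qed
qed

lemma good_quad:
  fixes M :: "'a::euclidean_space \<Rightarrow> 'a"
  assumes lin: "linear M" and sym: "\<And>a b. a \<bullet> M b = M a \<bullet> b"
    and low: "\<And>h. s * (norm h)\<^sup>2 \<le> h \<bullet> M h" and s0: "0 \<le> s"
  shows "good (\<lambda>y. y \<bullet> M y) (\<lambda>y. 2 *\<^sub>R M y) (\<lambda>y h. 2 *\<^sub>R M h) (2 * s) (2 * onorm M)"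
proof -
  have bl: "bounded_linear M" using lin by (simp add: linear_conv_bounded_linear)
  have K0: "0 \<le> onorm M" using bl by (rule onorm_pos_le)
  have dM: "(M has_derivative M) F" for F using bl by (rule bounded_linear_imp_has_derivative)
  show ?thesis
    unfolding good_def
  proof (intro conjI allI)
    show "0 \<le> 2 * s" "0 \<le> 2 * onorm M" using s0 K0 by auto
  next
    fix U
    have "((\<lambda>y. y \<bullet> M y) has_derivative (\<lambda>h. U \<bullet> M h + h \<bullet> M U)) (at U)"
      by (rule has_derivative_inner[OF has_derivative_ident dM])
    then show "((\<lambda>y. y \<bullet> M y) has_derivative (\<lambda>h. 2 *\<^sub>R M U \<bullet> h)) (at U)"
    proof (rule has_derivative_eq_rhs)
      show "(\<lambda>h. U \<bullet> M h + h \<bullet> M U) = (\<lambda>h. 2 *\<^sub>R M U \<bullet> h)"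
      proof
        fix h
        have "U \<bullet> M h = M U \<bullet> h" by (rule sym)
        moreover have "h \<bullet> M U = M U \<bullet> h" by (rule inner_commute)
        ultimately show "U \<bullet> M h + h \<bullet> M U = 2 *\<^sub>R M U \<bullet> h" by simp
      qed
    qed
    show "((\<lambda>y. 2 *\<^sub>R M y) has_derivative (\<lambda>h. 2 *\<^sub>R M h)) (at U)"
      by (rule has_derivative_scaleR_right[OF dM])
    fix h
    show "2 * s * (norm h)\<^sup>2 \<le> h \<bullet> 2 *\<^sub>R M h" using low[of h] by simp
    have "h \<bullet> M h \<le> norm h * norm (M h)" by (rule norm_cauchy_schwarz)
    also have "\<dots> \<le> norm h * (onorm M * norm h)" by (rule mult_left_mono[OF onorm[OF bl]]) simp
    finally show "h \<bullet> 2 *\<^sub>R M h \<le> 2 * onorm M * (norm h)\<^sup>2" by (simp add: power2_eq_square algebra_simps)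
  next
    fix U1 U2
    have "norm (2 *\<^sub>R M U1 - 2 *\<^sub>R M U2) = 2 * norm (M (U1 - U2))"
    proof -
      have "2 *\<^sub>R M U1 - 2 *\<^sub>R M U2 = 2 *\<^sub>R M (U1 - U2)" using lin by (simp add: linear_diff scaleR_diff_right)
      then show ?thesis by simp
    qed
    also have "\<dots> \<le> 2 * (onorm M * norm (U1 - U2))" using onorm[OF bl] by simp
    finally show "norm (2 *\<^sub>R M U1 - 2 *\<^sub>R M U2) \<le> 2 * onorm M * norm (U1 - U2)" by simp
  qed
qed

lemma good_barrier:
  fixes a :: "'a::euclidean_space"
  assumes d: "0 < \<delta>"
  shows "good (\<lambda>y. relaxed_barrier \<delta> (a \<bullet> y + e)) (\<lambda>y. b1 \<delta> (a \<bullet> y + e) *\<^sub>R a)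
     (\<lambda>y h. (b2 \<delta> (a \<bullet> y + e) * (a \<bullet> h)) *\<^sub>R a) 0 ((norm a)\<^sup>2 / \<delta>\<^sup>2)"
  unfolding good_def
proof (intro conjI allI)
  show "0 \<le> (0::real)" "0 \<le> (norm a)\<^sup>2 / \<delta>\<^sup>2" by auto
next
  fix U
  have affd: "((\<lambda>y. a \<bullet> y + e) has_derivative (\<lambda>h. a \<bullet> h)) (at U)"
    by (auto intro!: derivative_eq_intros)
  have "((\<lambda>y. relaxed_barrier \<delta> (a \<bullet> y + e)) has_derivative (\<lambda>h. b1 \<delta> (a \<bullet> U + e) * (a \<bullet> h))) (at U)"
    using has_derivative_compose[OF affd rb_deriv[OF d, unfolded has_field_derivative_def]] .
  then show "((\<lambda>y. relaxed_barrier \<delta> (a \<bullet> y + e)) has_derivative (\<lambda>h. b1 \<delta> (a \<bullet> U + e) *\<^sub>R a \<bullet> h)) (at U)"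
    by (rule has_derivative_eq_rhs) (simp add: fun_eq_iff)
  have "((\<lambda>y. b1 \<delta> (a \<bullet> y + e)) has_derivative (\<lambda>h. b2 \<delta> (a \<bullet> U + e) * (a \<bullet> h))) (at U)"
    using has_derivative_compose[OF affd b1_deriv[OF d, unfolded has_field_derivative_def]] .
  then show "((\<lambda>y. b1 \<delta> (a \<bullet> y + e) *\<^sub>R a) has_derivative (\<lambda>h. (b2 \<delta> (a \<bullet> U + e) * (a \<bullet> h)) *\<^sub>R a)) (at U)"
    by (rule has_derivative_scaleR_left)
  fix h
  have b2p: "0 < b2 \<delta> (a \<bullet> U + e)" "b2 \<delta> (a \<bullet> U + e) \<le> 1/\<delta>\<^sup>2" using b2_pos[OF d] b2_le[OF d] by auto
  have eq: "h \<bullet> (b2 \<delta> (a \<bullet> U + e) * (a \<bullet> h)) *\<^sub>R a = b2 \<delta> (a \<bullet> U + e) * (a \<bullet> h)\<^sup>2"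
    by (simp add: power2_eq_square inner_commute)
  show "0 * (norm h)\<^sup>2 \<le> h \<bullet> (b2 \<delta> (a \<bullet> U + e) * (a \<bullet> h)) *\<^sub>R a"
    unfolding eq using b2p by simp
  have "\<bar>a \<bullet> h\<bar>\<^sup>2 \<le> (norm a * norm h)\<^sup>2"
    using Cauchy_Schwarz_ineq2[of a h] by (rule power_mono) simp
  then have "(a \<bullet> h)\<^sup>2 \<le> (norm a * norm h)\<^sup>2" by simp
  then have "b2 \<delta> (a \<bullet> U + e) * (a \<bullet> h)\<^sup>2 \<le> (1/\<delta>\<^sup>2) * (norm a * norm h)\<^sup>2"
    using b2p by (intro mult_mono) auto
  then show "h \<bullet> (b2 \<delta> (a \<bullet> U + e) * (a \<bullet> h)) *\<^sub>R a \<le> (norm a)\<^sup>2 / \<delta>\<^sup>2 * (norm h)\<^sup>2"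
    unfolding eq by (simp add: power_mult_distrib)
next
  fix U1 U2
  have "norm (b1 \<delta> (a \<bullet> U1 + e) *\<^sub>R a - b1 \<delta> (a \<bullet> U2 + e) *\<^sub>R a) = \<bar>b1 \<delta> (a \<bullet> U1 + e) - b1 \<delta> (a \<bullet> U2 + e)\<bar> * norm a"
    by (simp add: scaleR_diff_left[symmetric])
  also have "\<dots> \<le> (\<bar>(a \<bullet> U1 + e) - (a \<bullet> U2 + e)\<bar> / \<delta>\<^sup>2) * norm a"
    by (rule mult_right_mono[OF b1_lip[OF d]]) simp
  also have "\<bar>(a \<bullet> U1 + e) - (a \<bullet> U2 + e)\<bar> = \<bar>a \<bullet> (U1 - U2)\<bar>" by (simp add: inner_diff_right)
  also have "\<bar>a \<bullet> (U1 - U2)\<bar> / \<delta>\<^sup>2 * norm a \<le> (norm a * norm (U1 - U2)) / \<delta>\<^sup>2 * norm a"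
    by (intro mult_right_mono divide_right_mono Cauchy_Schwarz_ineq2) auto
  also have "\<dots> = (norm a)\<^sup>2 / \<delta>\<^sup>2 * norm (U1 - U2)" by (simp add: power2_eq_square)
  finally show "norm (b1 \<delta> (a \<bullet> U1 + e) *\<^sub>R a - b1 \<delta> (a \<bullet> U2 + e) *\<^sub>R a) \<le> (norm a)\<^sup>2 / \<delta>\<^sup>2 * norm (U1 - U2)" .
qed

definition ugood :: "('p \<Rightarrow> 'a::euclidean_space \<Rightarrow> real) \<Rightarrow> real \<Rightarrow> bool" where
  "ugood F s \<longleftrightarrow> (\<exists>L. \<forall>x. \<exists>g H. good (F x) g H s L)"

lemma ugood_add: "ugood F1 s1 \<Longrightarrow> ugood F2 s2 \<Longrightarrow> ugood (\<lambda>x U. F1 x U + F2 x U) (s1 + s2)"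
  unfolding ugood_def by (metis good_add)

lemma ugood_cmul: "0 \<le> c \<Longrightarrow> ugood F s \<Longrightarrow> ugood (\<lambda>x U. c * F x U) (c * s)"
  unfolding ugood_def by (metis good_cmul)

lemma ugood_const: "ugood (\<lambda>x U. c x) 0"
  unfolding ugood_def using good_const by blast

lemma ugood_fix: "good f g H s L \<Longrightarrow> ugood (\<lambda>x. f) s"
  unfolding ugood_def by blast

lemma ugood_comp:
  fixes T :: "'a::euclidean_space \<Rightarrow> 'b::euclidean_space"
  assumes "good \<phi> g H s L" "linear T"
  shows "ugood (\<lambda>x U. \<phi> (T U + c x)) 0"
  unfolding ugood_def using good_comp[OF assms] by blast

lemma ugood_sum:
  assumes "finite I" "\<And>i. i \<in> I \<Longrightarrow> ugood (F i) 0"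
  shows "ugood (\<lambda>x U. \<Sum>i\<in>I. F i x U) 0"
  using assms
proof (induction I rule: finite_induct)
  case empty
  then show ?case using ugood_const[of "\<lambda>x. 0"] by simp
next
  case (insert i I)
  then have "ugood (\<lambda>x U. F i x U + (\<Sum>i\<in>I. F i x U)) (0 + 0)" by (intro ugood_add) auto
  then show ?case using insert by simp
qed

lemma ugood_cong: "ugood F s \<Longrightarrow> (\<And>x U. F x U = G x U) \<Longrightarrow> ugood G s"
proof -
  assume "ugood F s" "\<And>x U. F x U = G x U"
  then have "F = G" by (auto simp: fun_eq_iff)
  then show ?thesis using \<open>ugood F s\<close> by simp
qed

lemma good_mat_quad:
  fixes Q :: "real^'n^'n"
  assumes "psd_mat Q"
  shows "\<exists>g H L. good (\<lambda>y. y \<bullet> (Q *v y)) g H 0 L"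
proof -
  have "good (\<lambda>y. y \<bullet> ((*v) Q) y) (\<lambda>y. 2 *\<^sub>R ((*v) Q) y) (\<lambda>y h. 2 *\<^sub>R ((*v) Q) h) (2 * 0) (2 * onorm ((*v) Q))"
    by (rule good_quad) (use assms in \<open>auto simp: psd_mat_def sym_mat_adj\<close>)
  then show ?thesis by auto
qed

lemma ugood_mat_quad_comp:
  fixes Q :: "real^'n^'n" and T :: "'a::euclidean_space \<Rightarrow> real^'n"
  assumes "psd_mat Q" "linear T"
  shows "ugood (\<lambda>x U. (T U + c x) \<bullet> (Q *v (T U + c x))) 0"
  using good_mat_quad[OF assms(1)] ugood_comp[OF _ assms(2)] by blast

lemma ugood_rec_barrier_comp:
  fixes C :: "real^'n^'q::finite" and T :: "'a::euclidean_space \<Rightarrow> real^'n"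
  assumes "0 < \<delta>" "\<forall>i. 0 \<le> w $ i" "linear T"
  shows "ugood (\<lambda>x U. rec_barrier \<delta> C d w (T U + c x)) 0"
proof -
  have "ugood (\<lambda>x U. \<Sum>i\<in>UNIV. (1 + w $ i) * (relaxed_barrier \<delta> ((- C $ i) \<bullet> (T U + c x) + d $ i) + ln (d $ i))) 0"
  proof (rule ugood_sum)
    fix i
    have g: "ugood (\<lambda>x U. relaxed_barrier \<delta> ((- C $ i) \<bullet> (T U + c x) + d $ i)) 0"
      using ugood_comp[OF good_barrier[OF assms(1), of "- C $ i" "d $ i"] assms(3)] .
    have "ugood (\<lambda>x U. relaxed_barrier \<delta> ((- C $ i) \<bullet> (T U + c x) + d $ i) + ln (d $ i)) (0 + 0)"
      using ugood_add[OF g ugood_const[of "\<lambda>x. ln (d $ i)"]] .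
    then have "ugood (\<lambda>x U. (1 + w $ i) * (relaxed_barrier \<delta> ((- C $ i) \<bullet> (T U + c x) + d $ i) + ln (d $ i))) ((1 + w $ i) * 0)"
      using assms(2) by (intro ugood_cmul) (auto intro: add_nonneg_nonneg)
    then show "ugood (\<lambda>x U. (1 + w $ i) * (relaxed_barrier \<delta> ((- C $ i) \<bullet> (T U + c x) + d $ i) + ln (d $ i))) 0"
      by simp
  qed simp
  then show ?thesis unfolding rec_barrier_def by simp
qed

definition RR :: "real^'m^'m \<Rightarrow> real^'m^'N \<Rightarrow> real^'m^'N" where
  "RR R U = (\<chi> j. R *v (U $ j))"

lemma RR_linear: "linear (RR R)"
  by (rule linearI) (simp_all add: RR_def vec_eq_iff matrix_vector_right_distrib matrix_scaleR_vector_ac scaleR_matrix_vector_assoc)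

lemma RR_inner: "a \<bullet> RR R b = (\<Sum>j\<in>UNIV. a $ j \<bullet> (R *v b $ j))"
  unfolding RR_def by (subst inner_vec_def) simp

lemma RR_inner': "RR R a \<bullet> b = (\<Sum>j\<in>UNIV. (R *v a $ j) \<bullet> b $ j)"
  unfolding RR_def by (subst inner_vec_def) simp

lemma RR_sym: "sym_mat R \<Longrightarrow> a \<bullet> RR R b = RR R a \<bullet> b"
  unfolding RR_inner RR_inner' by (simp add: sym_mat_adj)

lemma RR_low:
  assumes "\<forall>h. l * (norm h)\<^sup>2 \<le> h \<bullet> (R *v h)"
  shows "l * (norm U)\<^sup>2 \<le> U \<bullet> RR R U"
proof -
  have "(norm U)\<^sup>2 = (\<Sum>j\<in>UNIV. (norm (U $ j))\<^sup>2)"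
    by (simp only: power2_norm_eq_inner, subst inner_vec_def, rule refl)
  then have "l * (norm U)\<^sup>2 = (\<Sum>j\<in>UNIV. l * (norm (U $ j))\<^sup>2)"
    by (simp add: sum_distrib_left)
  also have "\<dots> \<le> (\<Sum>j\<in>UNIV. U $ j \<bullet> (R *v U $ j))"
    by (rule sum_mono) (use assms in blast)
  also have "\<dots> = U \<bullet> RR R U" by (simp add: RR_inner)
  finally show ?thesis .
qed

lemma RR_sum: "(\<Sum>k<CARD('N). blk U k \<bullet> (R *v blk U k)) = (U::real^'m^'N::enum) \<bullet> RR R U"
  by (simp add: RR_inner sum_enum[where F="\<lambda>j. U $ j \<bullet> (R *v U $ j)"] blk_def)

lemma linear_blk: "linear (\<lambda>U::real^'m^'N::enum. blk U k)"
  by (rule linearI) (simp_all add: blk_add blk_scale)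

lemma mpc_decomp:
  fixes A :: "real^'n^'n" and B :: "real^'m^'n" and U :: "real^'m^'N::enum"
  shows "mpc_cost A B Q R P \<epsilon> \<delta> Cx dx wx Cu du wu U x =
    (\<Sum>k<CARD('N). (traj A B 0 (blk U) k + traj A B x (\<lambda>j. 0) k) \<bullet> (Q *v (traj A B 0 (blk U) k + traj A B x (\<lambda>j. 0) k))
        + \<epsilon> * rec_barrier \<delta> Cx dx wx (traj A B 0 (blk U) k + traj A B x (\<lambda>j. 0) k)
        + \<epsilon> * rec_barrier \<delta> Cu du wu (blk U k + 0))
    + (traj A B 0 (blk U) CARD('N) + traj A B x (\<lambda>j. 0) CARD('N)) \<bullet> (P *v (traj A B 0 (blk U) CARD('N) + traj A B x (\<lambda>j. 0) CARD('N)))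
    + U \<bullet> RR R U"
proof -
  have tr: "traj A B x (blk U) k = traj A B 0 (blk U) k + traj A B x (\<lambda>j. 0) k" for k
    using traj_split[of A B x "blk U" k] by (simp add: add.commute)
  show ?thesis
    unfolding mpc_cost_def stage_cost_def tr RR_sum[symmetric]
    by (simp add: sum.distrib algebra_simps)
qed

lemma part2:
  fixes A :: "real^'n^'n" and B :: "real^'m^'n"
    and Cx :: "real^'n^'qx::finite" and dx :: "real^'qx"
    and Cu :: "real^'m^'qu::finite" and du :: "real^'qu"
    and Q P :: "real^'n^'n" and R :: "real^'m^'m"
    and \<epsilon> \<delta> :: real and wx :: "real^'qx" and wu :: "real^'qu"
  assumes eps: "\<epsilon> > 0" and Qpsd: "psd_mat Q" and Rpd: "pd_mat R" and Ppd: "pd_mat P"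
    and delta_pos: "0 < \<delta>" and wx_nn: "\<forall>i. 0 \<le> wx $ i" and wu_nn: "\<forall>j. 0 \<le> wu $ j"
  shows "\<exists>\<sigma> L. \<sigma> > 0 \<and> L > 0 \<and>
          (\<forall>x. \<exists>(g :: real^'m^'N::enum \<Rightarrow> real^'m^'N::enum) H.
             good (\<lambda>V. mpc_cost A B Q R P \<epsilon> \<delta> Cx dx wx Cu du wu V x) g H \<sigma> L)"
proof -
  obtain l where l: "l > 0" "\<forall>h. l * (norm h)\<^sup>2 \<le> h \<bullet> (R *v h)" using pd_lower[OF Rpd] by blast
  have symR: "sym_mat R" using Rpd by (simp add: pd_mat_def)
  have Ppsd: "psd_mat P" using Ppd by (rule pd_psd)
  let ?T = "\<lambda>k (U::real^'m^'N::enum). traj A B 0 (blk U) k"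
  let ?c = "\<lambda>k x. traj A B x (\<lambda>j::nat. 0::real^'m) k"
  have gF: "ugood (\<lambda>x U::real^'m^'N::enum. (?T k U + ?c k x) \<bullet> (Q *v (?T k U + ?c k x))
        + \<epsilon> * rec_barrier \<delta> Cx dx wx (?T k U + ?c k x)
        + \<epsilon> * rec_barrier \<delta> Cu du wu (blk U k + 0)) 0" for k
  proof -
    have a: "ugood (\<lambda>x U::real^'m^'N::enum. (?T k U + ?c k x) \<bullet> (Q *v (?T k U + ?c k x))) 0"
      by (rule ugood_mat_quad_comp[OF Qpsd linear_traj_U])
    have b: "ugood (\<lambda>x U::real^'m^'N::enum. \<epsilon> * rec_barrier \<delta> Cx dx wx (?T k U + ?c k x)) (\<epsilon> * 0)"
      by (rule ugood_cmul) (use eps ugood_rec_barrier_comp[OF delta_pos wx_nn linear_traj_U] in auto)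
    have c: "ugood (\<lambda>x U::real^'m^'N::enum. \<epsilon> * rec_barrier \<delta> Cu du wu (blk U k + 0)) (\<epsilon> * 0)"
      by (rule ugood_cmul) (use eps ugood_rec_barrier_comp[OF delta_pos wu_nn linear_blk, where c="\<lambda>x. 0"] in auto)
    show ?thesis using ugood_add[OF ugood_add[OF a b] c] by simp
  qed
  have gS: "ugood (\<lambda>x U::real^'m^'N::enum. \<Sum>k<CARD('N). (?T k U + ?c k x) \<bullet> (Q *v (?T k U + ?c k x))
        + \<epsilon> * rec_barrier \<delta> Cx dx wx (?T k U + ?c k x)
        + \<epsilon> * rec_barrier \<delta> Cu du wu (blk U k + 0)) 0"
    by (rule ugood_sum) (use gF in auto)
  have gP: "ugood (\<lambda>x U::real^'m^'N::enum. (?T CARD('N) U + ?c CARD('N) x) \<bullet> (P *v (?T CARD('N) U + ?c CARD('N) x))) 0"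
    by (rule ugood_mat_quad_comp[OF Ppsd linear_traj_U])
  have gR: "ugood (\<lambda>x U::real^'m^'N::enum. U \<bullet> RR R U) (2 * l)"
    by (rule ugood_fix, rule good_quad[OF RR_linear RR_sym[OF symR] RR_low[OF l(2)]]) (use l in auto)
  have "ugood (\<lambda>x U::real^'m^'N::enum. mpc_cost A B Q R P \<epsilon> \<delta> Cx dx wx Cu du wu U x) (0 + 0 + 2 * l)"
    unfolding mpc_decomp by (rule ugood_add[OF ugood_add[OF gS gP] gR])
  then obtain L where L: "\<forall>x. \<exists>g H. good (\<lambda>U::real^'m^'N::enum. mpc_cost A B Q R P \<epsilon> \<delta> Cx dx wx Cu du wu U x) g H (2 * l) L"
    unfolding ugood_def by auto
  have "\<forall>x. \<exists>g H. good (\<lambda>U::real^'m^'N::enum. mpc_cost A B Q R P \<epsilon> \<delta> Cx dx wx Cu du wu U x) g H (2 * l) (max L 1)"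
    using L good_mono by (meson max.cobounded1)
  then show ?thesis using l(1) by (intro exI[of _ "2 * l"] exI[of _ "max L 1"]) auto
qed

lemma convex_affine_comp':
  fixes f :: "'b::real_vector \<Rightarrow> real" and T :: "'a::real_vector \<Rightarrow> 'b"
  assumes f: "convex_on UNIV f" and T: "linear T"
  shows "convex_on UNIV (\<lambda>x. f (c + T x))"
  using convex_affine_comp[OF f T, of c] by (simp add: add.commute)

lemma part_convx:
  fixes A :: "real^'n^'n" and B :: "real^'m^'n"
    and Cx :: "real^'n^'qx::finite" and dx :: "real^'qx"
    and Cu :: "real^'m^'qu::finite" and du :: "real^'qu"
    and Q P :: "real^'n^'n" and R :: "real^'m^'m"
    and \<epsilon> \<delta> :: real and wx :: "real^'qx" and wu :: "real^'qu" and U :: "real^'m^'N::enum"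
  assumes eps: "\<epsilon> > 0" and Qpsd: "psd_mat Q" and Ppd: "pd_mat P"
    and delta_pos: "0 < \<delta>" and wx_nn: "\<forall>i. 0 \<le> wx $ i"
  shows "convex_on UNIV (\<lambda>x. mpc_cost A B Q R P \<epsilon> \<delta> Cx dx wx Cu du wu U x)"
proof -
  have cQ: "convex_on UNIV (\<lambda>y. y \<bullet> (Q *v y))" by (rule mat_quad_convex[OF Qpsd])
  have cP: "convex_on UNIV (\<lambda>y. y \<bullet> (P *v y))" by (rule mat_quad_convex[OF pd_psd[OF Ppd]])
  have cB: "convex_on UNIV (rec_barrier \<delta> Cx dx wx)" by (rule rec_barrier_convex[OF delta_pos wx_nn])
  have "convex_on UNIV (\<lambda>x. (\<Sum>k<CARD('N). (traj A B 0 (blk U) k + traj A B x (\<lambda>j. 0) k) \<bullet> (Q *v (traj A B 0 (blk U) k + traj A B x (\<lambda>j. 0) k))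
        + \<epsilon> * rec_barrier \<delta> Cx dx wx (traj A B 0 (blk U) k + traj A B x (\<lambda>j. 0) k)
        + \<epsilon> * rec_barrier \<delta> Cu du wu (blk U k + 0))
    + (traj A B 0 (blk U) CARD('N) + traj A B x (\<lambda>j. 0) CARD('N)) \<bullet> (P *v (traj A B 0 (blk U) CARD('N) + traj A B x (\<lambda>j. 0) CARD('N)))
    + U \<bullet> RR R U)"
  proof (intro convex_on_add convex_sum_fun convex_on_cmul)
    fix k
    show "convex_on UNIV (\<lambda>x. (traj A B 0 (blk U) k + traj A B x (\<lambda>j. 0) k) \<bullet> (Q *v (traj A B 0 (blk U) k + traj A B x (\<lambda>j. 0) k)))"
      by (rule convex_affine_comp'[OF cQ linear_traj_x])
    show "convex_on UNIV (\<lambda>x. rec_barrier \<delta> Cx dx wx (traj A B 0 (blk U) k + traj A B x (\<lambda>j. 0) k))"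
      by (rule convex_affine_comp'[OF cB linear_traj_x])
    show "convex_on UNIV (\<lambda>x. rec_barrier \<delta> Cu du wu (blk U k + 0))" by (simp add: convex_on_const)
  next
    show "convex_on UNIV (\<lambda>x. (traj A B 0 (blk U) CARD('N) + traj A B x (\<lambda>j. 0) CARD('N)) \<bullet> (P *v (traj A B 0 (blk U) CARD('N) + traj A B x (\<lambda>j. 0) CARD('N))))"
      by (rule convex_affine_comp'[OF cP linear_traj_x])
    show "convex_on UNIV (\<lambda>x. U \<bullet> RR R U)" by (simp add: convex_on_const)
  qed (use eps in auto)
  then show ?thesis unfolding mpc_decomp .
qed

lemma part_sconvU:
  fixes A :: "real^'n^'n" and B :: "real^'m^'n"
    and Cx :: "real^'n^'qx::finite" and dx :: "real^'qx"
    and Cu :: "real^'m^'qu::finite" and du :: "real^'qu"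
    and Q P :: "real^'n^'n" and R :: "real^'m^'m"
    and \<epsilon> \<delta> :: real and wx :: "real^'qx" and wu :: "real^'qu"
  assumes eps: "\<epsilon> > 0" and Qpsd: "psd_mat Q" and Rpd: "pd_mat R" and Ppd: "pd_mat P"
    and delta_pos: "0 < \<delta>" and wx_nn: "\<forall>i. 0 \<le> wx $ i" and wu_nn: "\<forall>j. 0 \<le> wu $ j"
  shows "strongly_convex_on UNIV (\<lambda>U :: real^'m^'N::enum. mpc_cost A B Q R P \<epsilon> \<delta> Cx dx wx Cu du wu U x)"
proof -
  obtain l where l: "l > 0" "\<forall>h. l * (norm h)\<^sup>2 \<le> h \<bullet> (R *v h)" using pd_lower[OF Rpd] by blast
  have symR: "sym_mat R" using Rpd by (simp add: pd_mat_def)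
  have cQ: "convex_on UNIV (\<lambda>y. y \<bullet> (Q *v y))" by (rule mat_quad_convex[OF Qpsd])
  have cP: "convex_on UNIV (\<lambda>y. y \<bullet> (P *v y))" by (rule mat_quad_convex[OF pd_psd[OF Ppd]])
  have cB: "convex_on UNIV (rec_barrier \<delta> Cx dx wx)" by (rule rec_barrier_convex[OF delta_pos wx_nn])
  have cBu: "convex_on UNIV (rec_barrier \<delta> Cu du wu)" by (rule rec_barrier_convex[OF delta_pos wu_nn])
  define M where "M = (\<lambda>U::real^'m^'N::enum. RR R U - l *\<^sub>R U)"
  interpret r: linear "RR R :: real^'m^'N::enum \<Rightarrow> _" by (rule RR_linear)
  have linM: "linear M" unfolding M_def
    by (rule linearI) (simp_all add: r.add r.scale algebra_simps)
  have cM: "convex_on UNIV (\<lambda>U. U \<bullet> M U)"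
  proof (rule quad_convex[OF linM])
    fix a b :: "real^'m^'N::enum"
    show "a \<bullet> M b = M a \<bullet> b" unfolding M_def
      by (simp add: inner_diff_right inner_diff_left RR_sym[OF symR])
    have "l * (norm a)\<^sup>2 \<le> a \<bullet> RR R a" by (rule RR_low[OF l(2)])
    then show "0 \<le> a \<bullet> M a" unfolding M_def by (simp add: inner_diff_right power2_norm_eq_inner)
  qed
  have "convex_on UNIV (\<lambda>U::real^'m^'N::enum. (\<Sum>k<CARD('N). (traj A B 0 (blk U) k + traj A B x (\<lambda>j. 0) k) \<bullet> (Q *v (traj A B 0 (blk U) k + traj A B x (\<lambda>j. 0) k))
        + \<epsilon> * rec_barrier \<delta> Cx dx wx (traj A B 0 (blk U) k + traj A B x (\<lambda>j. 0) k)
        + \<epsilon> * rec_barrier \<delta> Cu du wu (blk U k + 0))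
    + (traj A B 0 (blk U) CARD('N) + traj A B x (\<lambda>j. 0) CARD('N)) \<bullet> (P *v (traj A B 0 (blk U) CARD('N) + traj A B x (\<lambda>j. 0) CARD('N)))
    + U \<bullet> M U)"
  proof (intro convex_on_add convex_sum_fun convex_on_cmul)
    fix k
    show "convex_on UNIV (\<lambda>U::real^'m^'N::enum. (traj A B 0 (blk U) k + traj A B x (\<lambda>j. 0) k) \<bullet> (Q *v (traj A B 0 (blk U) k + traj A B x (\<lambda>j. 0) k)))"
      by (rule convex_affine_comp[OF cQ linear_traj_U])
    show "convex_on UNIV (\<lambda>U::real^'m^'N::enum. rec_barrier \<delta> Cx dx wx (traj A B 0 (blk U) k + traj A B x (\<lambda>j. 0) k))"
      by (rule convex_affine_comp[OF cB linear_traj_U])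
    show "convex_on UNIV (\<lambda>U::real^'m^'N::enum. rec_barrier \<delta> Cu du wu (blk U k + 0))"
      by (rule convex_affine_comp[OF cBu linear_blk])
  next
    show "convex_on UNIV (\<lambda>U::real^'m^'N::enum. (traj A B 0 (blk U) CARD('N) + traj A B x (\<lambda>j. 0) CARD('N)) \<bullet> (P *v (traj A B 0 (blk U) CARD('N) + traj A B x (\<lambda>j. 0) CARD('N))))"
      by (rule convex_affine_comp[OF cP linear_traj_U])
  qed (use eps cM in auto)
  moreover have "U \<bullet> M U = U \<bullet> RR R U - l * (norm U)\<^sup>2" for U
    unfolding M_def by (simp add: inner_diff_right power2_norm_eq_inner)
  ultimately have "convex_on UNIV (\<lambda>U::real^'m^'N::enum. mpc_cost A B Q R P \<epsilon> \<delta> Cx dx wx Cu du wu U x - l * (norm U)\<^sup>2)"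
    unfolding mpc_decomp by (simp add: algebra_simps)
  then show ?thesis by (rule strongly_convexI[OF l(1)])
qed

lemma K_inf_sq: assumes c: "0 < c" shows "K_inf (\<lambda>r. c * r\<^sup>2)"
  unfolding K_inf_def
proof (intro conjI allI impI)
  show "continuous_on {0..} (\<lambda>r. c * r\<^sup>2)" by (intro continuous_intros)
  show "strict_mono_on {0..} (\<lambda>r. c * r\<^sup>2)"
    by (rule strict_mono_onI) (use c in \<open>auto intro!: mult_strict_left_mono power_strict_mono\<close>)
  show "c * 0\<^sup>2 = 0" by simp
  show "0 \<le> c * s\<^sup>2" for s using c by simp
  show "filterlim (\<lambda>r. c * r\<^sup>2) at_top at_top"
    unfolding filterlim_at_top eventually_at_top_linorder
  proof
    fix Z :: real
    show "\<exists>N. \<forall>r\<ge>N. Z \<le> c * r\<^sup>2"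
    proof (intro exI[of _ "max 1 (Z / c)"] allI impI)
      fix r assume r: "max 1 (Z / c) \<le> r"
      then have "Z \<le> c * r" using c by (simp add: field_simps)
      also have "c * r \<le> c * r\<^sup>2" using r c by (intro mult_left_mono) (auto simp: power2_eq_square)
      finally show "Z \<le> c * r\<^sup>2" .
    qed
  qed
qed

lemma K_inf_mu: assumes c: "0 < c" shows "K_inf (\<lambda>r. c * min (r\<^sup>2) r)"
  unfolding K_inf_def
proof (intro conjI allI impI)
  show "continuous_on {0..} (\<lambda>r. c * min (r\<^sup>2) r)" by (intro continuous_intros)
  show "strict_mono_on {0..} (\<lambda>r. c * min (r\<^sup>2) r)"
  proof (rule strict_mono_onI)
    fix r s :: real assume "r \<in> {0..}" "s \<in> {0..}" "r < s"
    then have "r\<^sup>2 < s\<^sup>2" by (auto intro: power_strict_mono)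
    then have "min (r\<^sup>2) r < min (s\<^sup>2) s" using \<open>r < s\<close> by (auto simp: min_def)
    then show "c * min (r\<^sup>2) r < c * min (s\<^sup>2) s" using c by simp
  qed
  show "c * min (0\<^sup>2) 0 = 0" by simp
  show "0 \<le> c * min (s\<^sup>2) s" if "0 \<le> s" for s using c that by simp
  show "filterlim (\<lambda>r. c * min (r\<^sup>2) r) at_top at_top"
    unfolding filterlim_at_top eventually_at_top_linorder
  proof
    fix Z :: real
    show "\<exists>N. \<forall>r\<ge>N. Z \<le> c * min (r\<^sup>2) r"
    proof (intro exI[of _ "max 1 (Z / c)"] allI impI)
      fix r assume r: "max 1 (Z / c) \<le> r"
      then have "min (r\<^sup>2) r = r" by (auto simp: min_def power2_eq_square)
      moreover have "Z \<le> c * r" using r c by (simp add: field_simps)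
      ultimately show "Z \<le> c * min (r\<^sup>2) r" by simp
    qed
  qed
qed

lemma quad_le:
  fixes M :: "real^'n^'n"
  shows "y \<bullet> (M *v y) \<le> onorm ((*v) M) * (norm y)\<^sup>2"
proof -
  have bl: "bounded_linear ((*v) M)" by (simp add: linear_conv_bounded_linear[symmetric])
  have "y \<bullet> (M *v y) \<le> norm y * norm (M *v y)" by (rule norm_cauchy_schwarz)
  also have "\<dots> \<le> norm y * (onorm ((*v) M) * norm y)" by (rule mult_left_mono[OF onorm[OF bl]]) simp
  finally show ?thesis by (simp add: power2_eq_square algebra_simps)
qed

lemma onorm_mat_nonneg: "0 \<le> onorm ((*v) (M::real^'n^'m))"
  by (rule onorm_pos_le) (simp add: linear_conv_bounded_linear[symmetric])

lemma kappa_exists: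
  fixes C :: "real^'n^'q::finite" and d :: "real^'q"
  assumes comp: "compact {x. \<forall>i. (C *v x) $ i \<le> d $ i}" and dpos: "\<forall>i. 0 < d $ i"
  shows "\<exists>\<kappa>>0. \<forall>x. \<exists>i. norm x \<le> \<kappa> * \<bar>C $ i \<bullet> x\<bar>"
proof -
  let ?X = "{x. \<forall>i. (C *v x) $ i \<le> d $ i}"
  obtain \<rho> where \<rho>: "\<rho> > 0" "\<forall>y\<in>?X. norm y \<le> \<rho>"
    using compact_imp_bounded[OF comp] unfolding bounded_pos by blast
  define dm where "dm = Min (range (\<lambda>i. d $ i))"
  have dm_le: "dm \<le> d $ i" for i unfolding dm_def by (rule Min_le) auto
  have dm_pos: "0 < dm" unfolding dm_def using dpos by (subst Min_gr_iff) auto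
  have "\<exists>i. norm x \<le> (\<rho> / dm) * \<bar>C $ i \<bullet> x\<bar>" for x
  proof -
    define m where "m = Max (range (\<lambda>i. \<bar>C $ i \<bullet> x\<bar>))"
    have "m \<in> range (\<lambda>i. \<bar>C $ i \<bullet> x\<bar>)" unfolding m_def by (rule Max_in) auto
    then obtain i where i: "\<bar>C $ i \<bullet> x\<bar> = m" by auto
    have le_m: "\<bar>C $ j \<bullet> x\<bar> \<le> m" for j unfolding m_def by (rule Max_ge) auto
    have "norm x \<le> (\<rho> / dm) * m"
    proof (cases "m = 0")
      case True
      show ?thesis
      proof (rule ccontr)
        assume "\<not> ?thesis"
        then have "x \<noteq> 0" using True by auto
        define t where "t = (\<rho> + 1) / norm x"
        have "t *\<^sub>R x \<in> ?X"
          using le_m[unfolded True] dpos by (auto simp: matrix_vector_mul_component less_imp_le)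
        then have "norm (t *\<^sub>R x) \<le> \<rho>" using \<rho> by blast
        moreover have "norm (t *\<^sub>R x) = \<rho> + 1" using \<open>x \<noteq> 0\<close> \<rho> by (simp add: t_def)
        ultimately show False by simp
      qed
    next
      case False
      then have mpos: "0 < m" using le_m[of i] i by auto
      define t where "t = dm / m"
      have tpos: "0 < t" using mpos dm_pos by (simp add: t_def)
      have "t *\<^sub>R x \<in> ?X"
      proof (clarify)
        fix j
        have "(C *v (t *\<^sub>R x)) $ j = t * (C $ j \<bullet> x)" by (simp add: matrix_vector_mul_component)
        also have "\<dots> \<le> t * m" using le_m[of j] tpos by (intro mult_left_mono) auto
        also have "\<dots> = dm" using mpos by (simp add: t_def)
        also have "\<dots> \<le> d $ j" by (rule dm_le)
        finally show "(C *v (t *\<^sub>R x)) $ j \<le> d $ j" .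
      qed
      then have "norm (t *\<^sub>R x) \<le> \<rho>" using \<rho> by blast
      then have "t * norm x \<le> \<rho>" using tpos by simp
      then show ?thesis using mpos dm_pos by (simp add: t_def field_simps)
    qed
    then show ?thesis using i by metis
  qed
  then show ?thesis using \<rho>(1) dm_pos by (intro exI[of _ "\<rho> / dm"]) auto
qed

lemma mu_mono: "0 \<le> a \<Longrightarrow> a \<le> b \<Longrightarrow> min (a\<^sup>2) a \<le> min (b\<^sup>2) (b::real)"
  by (metis min.mono power_mono)

lemma mu_scale:
  assumes c: "1 \<le> c" and r: "0 \<le> r"
  shows "min (r\<^sup>2) r / c\<^sup>2 \<le> min ((r / c)\<^sup>2) (r / (c::real))"
proof -
  have c0: "0 < c" using c by simp
  have "r / c\<^sup>2 \<le> r / c" using c r by (intro divide_left_mono) (auto simp: power2_eq_square mult_left_le_one_le intro: order_trans[OF c] mult_right_mono[of 1 c c, simplified])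
  moreover have "min (r\<^sup>2) r / c\<^sup>2 = min (r\<^sup>2 / c\<^sup>2) (r / c\<^sup>2)" using c0 by (simp add: min_divide_distrib_right)
  ultimately show ?thesis by (auto simp: power_divide min_def)
qed

lemma mu_le_sq: "0 \<le> r \<Longrightarrow> min (r\<^sup>2) r \<le> (r::real)\<^sup>2" by simp

lemma lower_combine:
  fixes l e k nU nx r :: real
  assumes l: "0 < l" and e: "0 < e" and k: "0 < k"
    and nU: "0 \<le> nU" and nx: "0 \<le> nx" and r: "0 \<le> r" and rle: "r \<le> nU + nx"
  shows "min (l / 4) (e / (max 1 (2 * k))\<^sup>2) * min (r\<^sup>2) r \<le> l * nU\<^sup>2 + e * min ((nx / k)\<^sup>2) (nx / k)"
proof -
  define c where "c = max 1 (2 * k)"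
  have c1: "1 \<le> c" by (simp add: c_def)
  have c0: "0 < c" using c1 by simp
  define c0 where "c0 = min (l / 4) (e / c\<^sup>2)"
  have mu0: "0 \<le> min (r\<^sup>2) r" using r by simp
  have t1: "0 \<le> l * nU\<^sup>2" using l by simp
  have t2: "0 \<le> e * min ((nx / k)\<^sup>2) (nx / k)" using e nx k by simp
  show ?thesis unfolding c_def[symmetric] c0_def[symmetric]
  proof (cases "r / 2 \<le> nU")
    case True
    have "c0 * min (r\<^sup>2) r \<le> (l / 4) * min (r\<^sup>2) r" unfolding c0_def by (rule mult_right_mono[OF min.cobounded1 mu0])
    also have "\<dots> \<le> (l / 4) * r\<^sup>2" using l r by (intro mult_left_mono) auto
    also have "\<dots> = l * (r / 2)\<^sup>2" by (simp add: power_divide)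
    also have "\<dots> \<le> l * nU\<^sup>2" using True r l by (intro mult_left_mono power_mono) auto
    finally show "c0 * min (r\<^sup>2) r \<le> l * nU\<^sup>2 + e * min ((nx / k)\<^sup>2) (nx / k)" using t2 by simp
  next
    case False
    then have nxr: "r / 2 \<le> nx" using rle by simp
    have "r / c \<le> r / (2 * k)" using r k by (intro divide_left_mono) (auto simp: c_def)
    also have "\<dots> \<le> nx / k" using nxr k by (simp add: field_simps)
    finally have rc: "r / c \<le> nx / k" .
    have "c0 * min (r\<^sup>2) r \<le> (e / c\<^sup>2) * min (r\<^sup>2) r" unfolding c0_def by (rule mult_right_mono[OF min.cobounded2 mu0])
    also have "\<dots> = e * (min (r\<^sup>2) r / c\<^sup>2)" by simp
    also have "\<dots> \<le> e * min ((r / c)\<^sup>2) (r / c)" using e by (intro mult_left_mono mu_scale[OF c1 r]) auto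
    also have "\<dots> \<le> e * min ((nx / k)\<^sup>2) (nx / k)" using e r c0 rc by (intro mult_left_mono mu_mono) auto
    finally show "c0 * min (r\<^sup>2) r \<le> l * nU\<^sup>2 + e * min ((nx / k)\<^sup>2) (nx / k)" using t1 by simp
  qed
qed

lemma stage_upper:
  fixes Cx :: "real^'n^'qx::finite" and Cu :: "real^'m^'qu::finite"
  assumes eps: "0 \<le> \<epsilon>" and delta_pos: "0 < \<delta>"
    and delta_x: "\<forall>i. \<delta> \<le> dx $ i" and delta_u: "\<forall>j. \<delta> \<le> du $ j"
    and wx_nn: "\<forall>i. 0 \<le> wx $ i" and wu_nn: "\<forall>j. 0 \<le> wu $ j"
    and wx_cent: "transpose Cx *v (\<chi> i. (1 + wx $ i) / dx $ i) = 0"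
    and wu_cent: "transpose Cu *v (\<chi> j. (1 + wu $ j) / du $ j) = 0"
  shows "stage_cost Q R \<epsilon> \<delta> Cx dx wx Cu du wu y u \<le>
     (onorm ((*v) Q) + \<epsilon> * onorm ((*v) ((1 / (2 * \<delta>\<^sup>2)) *\<^sub>R (transpose Cx ** diag_mat (1 + wx) ** Cx)))) * (norm y)\<^sup>2
   + (onorm ((*v) R) + \<epsilon> * onorm ((*v) ((1 / (2 * \<delta>\<^sup>2)) *\<^sub>R (transpose Cu ** diag_mat (1 + wu) ** Cu)))) * (norm u)\<^sup>2"
proof -
  have bx: "rec_barrier \<delta> Cx dx wx y \<le> onorm ((*v) ((1 / (2 * \<delta>\<^sup>2)) *\<^sub>R (transpose Cx ** diag_mat (1 + wx) ** Cx))) * (norm y)\<^sup>2"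
    using rec_barrier_upper[OF wx_cent delta_pos delta_x wx_nn] quad_le order_trans by blast
  have bu: "rec_barrier \<delta> Cu du wu u \<le> onorm ((*v) ((1 / (2 * \<delta>\<^sup>2)) *\<^sub>R (transpose Cu ** diag_mat (1 + wu) ** Cu))) * (norm u)\<^sup>2"
    using rec_barrier_upper[OF wu_cent delta_pos delta_u wu_nn] quad_le order_trans by blast
  have "\<epsilon> * rec_barrier \<delta> Cx dx wx y \<le> \<epsilon> * (onorm ((*v) ((1 / (2 * \<delta>\<^sup>2)) *\<^sub>R (transpose Cx ** diag_mat (1 + wx) ** Cx))) * (norm y)\<^sup>2)"
    using bx eps by (rule mult_left_mono)
  moreover have "\<epsilon> * rec_barrier \<delta> Cu du wu u \<le> \<epsilon> * (onorm ((*v) ((1 / (2 * \<delta>\<^sup>2)) *\<^sub>R (transpose Cu ** diag_mat (1 + wu) ** Cu))) * (norm u)\<^sup>2)"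
    using bu eps by (rule mult_left_mono)
  moreover have "y \<bullet> (Q *v y) \<le> onorm ((*v) Q) * (norm y)\<^sup>2" by (rule quad_le)
  moreover have "u \<bullet> (R *v u) \<le> onorm ((*v) R) * (norm u)\<^sup>2" by (rule quad_le)
  ultimately show ?thesis unfolding stage_cost_def by (simp add: algebra_simps)
qed

lemma stage_lower:
  fixes Cx :: "real^'n^'qx::finite" and Cu :: "real^'m^'qu::finite"
  assumes eps: "0 \<le> \<epsilon>" and delta_pos: "0 < \<delta>" and Qpsd: "psd_mat Q"
    and delta_u: "\<forall>j. \<delta> \<le> du $ j" and wu_nn: "\<forall>j. 0 \<le> wu $ j"
    and wu_cent: "transpose Cu *v (\<chi> j. (1 + wu $ j) / du $ j) = 0"
  shows "u \<bullet> (R *v u) + \<epsilon> * rec_barrier \<delta> Cx dx wx y \<le> stage_cost Q R \<epsilon> \<delta> Cx dx wx Cu du wu y u"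
proof -
  have "0 \<le> rec_barrier \<delta> Cu du wu u" by (rule rec_barrier_nonneg[OF wu_cent delta_pos delta_u wu_nn])
  then have "0 \<le> \<epsilon> * rec_barrier \<delta> Cu du wu u" using eps by simp
  moreover have "0 \<le> y \<bullet> (Q *v y)" using Qpsd by (simp add: psd_mat_def)
  ultimately show ?thesis unfolding stage_cost_def by simp
qed

lemma part1:
  fixes A :: "real^'n^'n" and B :: "real^'m^'n"
    and Cx :: "real^'n^'qx::finite" and dx :: "real^'qx"
    and Cu :: "real^'m^'qu::finite" and du :: "real^'qu"
    and Q P :: "real^'n^'n" and R :: "real^'m^'m"
    and \<epsilon> \<delta> :: real and wx :: "real^'qx" and wu :: "real^'qu"
  assumes Xcomp: "compact {x. \<forall>i. (Cx *v x) $ i \<le> dx $ i}"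
    and dx_pos: "\<forall>i. 0 < dx $ i"
    and eps: "\<epsilon> > 0"
    and Qpsd: "psd_mat Q" and Rpd: "pd_mat R"
    and delta_pos: "0 < \<delta>"
    and delta_x: "\<forall>i. \<delta> \<le> dx $ i" and delta_u: "\<forall>j. \<delta> \<le> du $ j"
    and wx_nn: "\<forall>i. 0 \<le> wx $ i" and wu_nn: "\<forall>j. 0 \<le> wu $ j"
    and wx_cent: "transpose Cx *v (\<chi> i. (1 + wx $ i) / dx $ i) = 0"
    and wu_cent: "transpose Cu *v (\<chi> j. (1 + wu $ j) / du $ j) = 0"
    and Ppd: "pd_mat P"
  shows "\<exists>\<alpha>l \<alpha>u. K_inf \<alpha>l \<and> K_inf \<alpha>u \<and>
        (\<forall>(U :: real^'m^'N::enum) x.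
           \<alpha>l (norm (U, x)) \<le> mpc_cost A B Q R P \<epsilon> \<delta> Cx dx wx Cu du wu U x \<and>
           mpc_cost A B Q R P \<epsilon> \<delta> Cx dx wx Cu du wu U x \<le> \<alpha>u (norm (U, x)))"
proof -
  define N where "N = CARD('N)"
  have N0: "0 < N" unfolding N_def by simp
  define L where "L = (\<lambda>k (w::(real^'m^'N::enum) \<times> (real^'n)). traj A B (snd w) (blk (fst w)) k)"
  have blL: "bounded_linear (L k)" for k
    unfolding L_def using linear_traj_Ux by (simp add: linear_conv_bounded_linear[symmetric])
  define a where "a = onorm ((*v) Q) + \<epsilon> * onorm ((*v) ((1 / (2 * \<delta>\<^sup>2)) *\<^sub>R (transpose Cx ** diag_mat (1 + wx) ** Cx)))"
  define b where "b = onorm ((*v) R) + \<epsilon> * onorm ((*v) ((1 / (2 * \<delta>\<^sup>2)) *\<^sub>R (transpose Cu ** diag_mat (1 + wu) ** Cu)))"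
  have a0: "0 \<le> a" unfolding a_def by (intro add_nonneg_nonneg mult_nonneg_nonneg onorm_mat_nonneg) (use eps in auto)
  have b0: "0 \<le> b" unfolding b_def by (intro add_nonneg_nonneg mult_nonneg_nonneg onorm_mat_nonneg) (use eps in auto)
  define Cst where "Cst = (\<Sum>k<N. a * (onorm (L k))\<^sup>2 + b) + onorm ((*v) P) * (onorm (L N))\<^sup>2 + 1"
  have Cpos: "0 < Cst" unfolding Cst_def using a0 b0
    by (intro add_nonneg_pos add_nonneg_nonneg sum_nonneg mult_nonneg_nonneg onorm_mat_nonneg) auto
  have upper: "mpc_cost A B Q R P \<epsilon> \<delta> Cx dx wx Cu du wu U x \<le> Cst * (norm (U, x))\<^sup>2" for U :: "real^'m^'N::enum" and x
  proof -
    let ?w = "(U, x)"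
    have Lk: "traj A B x (blk U) k = L k ?w" for k by (simp add: L_def)
    have nL: "(norm (L k ?w))\<^sup>2 \<le> (onorm (L k))\<^sup>2 * (norm ?w)\<^sup>2" for k
    proof -
      have "norm (L k ?w) \<le> onorm (L k) * norm ?w" by (rule onorm[OF blL])
      then have "(norm (L k ?w))\<^sup>2 \<le> (onorm (L k) * norm ?w)\<^sup>2" by (rule power_mono) simp
      then show ?thesis by (simp add: power_mult_distrib)
    qed
    have nu: "(norm (blk U k))\<^sup>2 \<le> (norm ?w)\<^sup>2" for k
      by (rule power_mono[OF order_trans[OF norm_blk_le norm_fst_le]]) simp
    have st: "stage_cost Q R \<epsilon> \<delta> Cx dx wx Cu du wu (traj A B x (blk U) k) (blk U k) \<le> (a * (onorm (L k))\<^sup>2 + b) * (norm ?w)\<^sup>2" for k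
    proof -
      have "stage_cost Q R \<epsilon> \<delta> Cx dx wx Cu du wu (traj A B x (blk U) k) (blk U k) \<le> a * (norm (L k ?w))\<^sup>2 + b * (norm (blk U k))\<^sup>2"
        unfolding a_def b_def Lk[symmetric]
        by (rule stage_upper) (use eps delta_pos delta_x delta_u wx_nn wu_nn wx_cent wu_cent in auto)
      also have "\<dots> \<le> a * ((onorm (L k))\<^sup>2 * (norm ?w)\<^sup>2) + b * (norm ?w)\<^sup>2"
        using a0 b0 nL nu by (intro add_mono mult_left_mono) auto
      finally show ?thesis by (simp add: algebra_simps)
    qed
    have tm: "traj A B x (blk U) N \<bullet> (P *v traj A B x (blk U) N) \<le> onorm ((*v) P) * (onorm (L N))\<^sup>2 * (norm ?w)\<^sup>2"
    proof -
      have "traj A B x (blk U) N \<bullet> (P *v traj A B x (blk U) N) \<le> onorm ((*v) P) * (norm (L N ?w))\<^sup>2"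
        unfolding Lk by (rule quad_le)
      also have "\<dots> \<le> onorm ((*v) P) * ((onorm (L N))\<^sup>2 * (norm ?w)\<^sup>2)"
        using nL onorm_mat_nonneg by (intro mult_left_mono) auto
      finally show ?thesis by (simp add: algebra_simps)
    qed
    have "mpc_cost A B Q R P \<epsilon> \<delta> Cx dx wx Cu du wu U x \<le> (\<Sum>k<N. (a * (onorm (L k))\<^sup>2 + b) * (norm ?w)\<^sup>2) + onorm ((*v) P) * (onorm (L N))\<^sup>2 * (norm ?w)\<^sup>2"
      unfolding mpc_cost_def N_def[symmetric] by (intro add_mono sum_mono st tm)
    also have "\<dots> = (\<Sum>k<N. a * (onorm (L k))\<^sup>2 + b) * (norm ?w)\<^sup>2 + onorm ((*v) P) * (onorm (L N))\<^sup>2 * (norm ?w)\<^sup>2"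
      by (simp only: sum_distrib_right)
    also have "\<dots> \<le> Cst * (norm ?w)\<^sup>2"
    proof -
      have "Cst * (norm ?w)\<^sup>2 = (\<Sum>k<N. a * (onorm (L k))\<^sup>2 + b) * (norm ?w)\<^sup>2 + onorm ((*v) P) * (onorm (L N))\<^sup>2 * (norm ?w)\<^sup>2 + (norm ?w)\<^sup>2"
        unfolding Cst_def by (simp only: distrib_right mult_1_left)
      then show ?thesis by simp
    qed
    finally show ?thesis .
  qed
  obtain l where l: "l > 0" "\<forall>h. l * (norm h)\<^sup>2 \<le> h \<bullet> (R *v h)" using pd_lower[OF Rpd] by blast
  obtain \<kappa> where \<kappa>: "\<kappa> > 0" "\<forall>x. \<exists>i. norm x \<le> \<kappa> * \<bar>Cx $ i \<bullet> x\<bar>" using kappa_exists[OF Xcomp dx_pos] by blast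
  define D where "D = Max (range (\<lambda>i. dx $ i))"
  have D: "\<forall>i. dx $ i \<le> D" unfolding D_def by auto
  define mm where "mm = (1/(D+1)\<^sup>2) / 2"
  have "\<delta> \<le> D" by (rule order_trans[OF delta_x[rule_format] D[rule_format]])
  then have "0 < D + 1" using delta_pos by simp
  then have mm0: "0 < mm" unfolding mm_def by simp
  have lower: "l * (norm U)\<^sup>2 + (\<epsilon> * mm) * min ((norm x / \<kappa>)\<^sup>2) (norm x / \<kappa>) \<le> mpc_cost A B Q R P \<epsilon> \<delta> Cx dx wx Cu du wu U x"
    for U :: "real^'m^'N::enum" and x
  proof -
    obtain i where i: "norm x \<le> \<kappa> * \<bar>Cx $ i \<bullet> x\<bar>" using \<kappa>(2) by blast
    have xi: "norm x / \<kappa> \<le> \<bar>Cx $ i \<bullet> x\<bar>" using i \<kappa>(1) by (simp add: field_simps)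
    have bx: "mm * min ((norm x / \<kappa>)\<^sup>2) (norm x / \<kappa>) \<le> rec_barrier \<delta> Cx dx wx x"
    proof -
      have "mm * min ((norm x / \<kappa>)\<^sup>2) (norm x / \<kappa>) \<le> mm * min (\<bar>Cx $ i \<bullet> x\<bar>\<^sup>2) \<bar>Cx $ i \<bullet> x\<bar>"
        using mm0 xi \<kappa>(1) by (intro mult_left_mono mu_mono) auto
      also have "\<dots> \<le> rec_barrier \<delta> Cx dx wx x"
        using rec_barrier_lower[OF wx_cent delta_pos delta_x wx_nn D, of i x] by (simp add: mm_def)
      finally show ?thesis .
    qed
    define S where "S = (\<lambda>k. stage_cost Q R \<epsilon> \<delta> Cx dx wx Cu du wu (traj A B x (blk U) k) (blk U k))"
    have Sk: "blk U k \<bullet> (R *v blk U k) + \<epsilon> * rec_barrier \<delta> Cx dx wx (traj A B x (blk U) k) \<le> S k" for k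
      unfolding S_def by (rule stage_lower) (use eps delta_pos Qpsd delta_u wu_nn wu_cent in auto)
    have bnn: "0 \<le> \<epsilon> * rec_barrier \<delta> Cx dx wx (traj A B x (blk U) k)" for k
      using rec_barrier_nonneg[OF wx_cent delta_pos delta_x wx_nn] eps by simp
    have "(\<Sum>k<N. blk U k \<bullet> (R *v blk U k)) + \<epsilon> * rec_barrier \<delta> Cx dx wx (traj A B x (blk U) 0)
        \<le> (\<Sum>k<N. blk U k \<bullet> (R *v blk U k)) + (\<Sum>k<N. \<epsilon> * rec_barrier \<delta> Cx dx wx (traj A B x (blk U) k))"
      using member_le_sum[of 0 "{..<N}" "\<lambda>k. \<epsilon> * rec_barrier \<delta> Cx dx wx (traj A B x (blk U) k)"] bnn N0 by auto
    also have "\<dots> \<le> (\<Sum>k<N. S k)" unfolding sum.distrib[symmetric] by (rule sum_mono[OF Sk])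
    finally have s1: "(\<Sum>k<N. blk U k \<bullet> (R *v blk U k)) + \<epsilon> * rec_barrier \<delta> Cx dx wx x \<le> (\<Sum>k<N. S k)" by simp
    have "l * (norm U)\<^sup>2 \<le> U \<bullet> RR R U" by (rule RR_low[OF l(2)])
    also have "\<dots> = (\<Sum>k<N. blk U k \<bullet> (R *v blk U k))" unfolding N_def by (rule RR_sum[symmetric])
    finally have s2: "l * (norm U)\<^sup>2 \<le> (\<Sum>k<N. blk U k \<bullet> (R *v blk U k))" .
    have s3: "0 \<le> traj A B x (blk U) N \<bullet> (P *v traj A B x (blk U) N)"
      using pd_psd[OF Ppd] by (simp add: psd_mat_def)
    have "(\<epsilon> * mm) * min ((norm x / \<kappa>)\<^sup>2) (norm x / \<kappa>) \<le> \<epsilon> * rec_barrier \<delta> Cx dx wx x"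
      using bx eps by (simp add: mult.assoc mult_left_mono)
    then show ?thesis using s1 s2 s3 unfolding mpc_cost_def N_def[symmetric] S_def by linarith
  qed
  define c0 where "c0 = min (l / 4) ((\<epsilon> * mm) / (max 1 (2 * \<kappa>))\<^sup>2)"
  have c0pos: "0 < c0" unfolding c0_def using l(1) eps mm0 by auto
  have bnd: "\<forall>(U::real^'m^'N::enum) x. c0 * min ((norm (U, x))\<^sup>2) (norm (U, x)) \<le> mpc_cost A B Q R P \<epsilon> \<delta> Cx dx wx Cu du wu U x
      \<and> mpc_cost A B Q R P \<epsilon> \<delta> Cx dx wx Cu du wu U x \<le> Cst * (norm (U, x))\<^sup>2"
  proof (intro allI conjI)
    fix U :: "real^'m^'N::enum" and x
    show "mpc_cost A B Q R P \<epsilon> \<delta> Cx dx wx Cu du wu U x \<le> Cst * (norm (U, x))\<^sup>2" by (rule upper)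
    have "c0 * min ((norm (U, x))\<^sup>2) (norm (U, x)) \<le> l * (norm U)\<^sup>2 + (\<epsilon> * mm) * min ((norm x / \<kappa>)\<^sup>2) (norm x / \<kappa>)"
      unfolding c0_def by (rule lower_combine) (use l(1) eps mm0 \<kappa>(1) norm_Pair_le in auto)
    also have "\<dots> \<le> mpc_cost A B Q R P \<epsilon> \<delta> Cx dx wx Cu du wu U x" by (rule lower)
    finally show "c0 * min ((norm (U, x))\<^sup>2) (norm (U, x)) \<le> mpc_cost A B Q R P \<epsilon> \<delta> Cx dx wx Cu du wu U x" .
  qed
  show ?thesis
    apply (rule exI[of _ "\<lambda>r. c0 * min (r\<^sup>2) r"], rule exI[of _ "\<lambda>r. Cst * r\<^sup>2"])
    using K_inf_mu[OF c0pos] K_inf_sq[OF Cpos] bnd by simp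
qed

theorem lemma1:
  fixes A :: "real^'n^'n" and B :: "real^'m^'n"
    and Cx :: "real^'n^'qx::finite" and dx :: "real^'qx"
    and Cu :: "real^'m^'qu::finite" and du :: "real^'qu"
    and Q P :: "real^'n^'n" and R :: "real^'m^'m"
    and \<epsilon> \<delta> :: real and wx :: "real^'qx" and wu :: "real^'qu"
    and K :: "real^'n^'m"
  assumes stab: "stabilizable A B"
    and Xcomp: "compact {x. \<forall>i. (Cx *v x) $ i \<le> dx $ i}"
    and Ucomp: "compact {u. \<forall>j. (Cu *v u) $ j \<le> du $ j}"
    and dx_pos: "\<forall>i. 0 < dx $ i" and du_pos: "\<forall>j. 0 < du $ j"
    and eps: "\<epsilon> > 0"
    and Qpsd: "psd_mat Q" and Rpd: "pd_mat R"
    and delta_pos: "0 < \<delta>"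
    and delta_x: "\<forall>i. \<delta> \<le> dx $ i" and delta_u: "\<forall>j. \<delta> \<le> du $ j"
    and wx_nn: "\<forall>i. 0 \<le> wx $ i" and wu_nn: "\<forall>j. 0 \<le> wu $ j"
    and wx_cent: "transpose Cx *v (\<chi> i. (1 + wx $ i) / dx $ i) = 0"
    and wu_cent: "transpose Cu *v (\<chi> j. (1 + wu $ j) / du $ j) = 0"
    and Ppd: "pd_mat P"
    and K_def: "K = - (matrix_inv (R + transpose B ** P ** B
                   + \<epsilon> *\<^sub>R ((1 / (2 * \<delta>\<^sup>2)) *\<^sub>R (transpose Cu ** diag_mat (1 + wu) ** Cu)))
                   ** transpose B ** P ** A)"
    and Ric: "P = transpose (A + B ** K) ** P ** (A + B ** K)
                 + transpose K ** (R + \<epsilon> *\<^sub>R ((1 / (2 * \<delta>\<^sup>2)) *\<^sub>R (transpose Cu ** diag_mat (1 + wu) ** Cu))) ** K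
                 + Q + \<epsilon> *\<^sub>R ((1 / (2 * \<delta>\<^sup>2)) *\<^sub>R (transpose Cx ** diag_mat (1 + wx) ** Cx))"
  shows
    "(\<exists>\<alpha>l \<alpha>u. K_inf \<alpha>l \<and> K_inf \<alpha>u \<and>
        (\<forall>(U :: real^'m^'N::enum) x.
           \<alpha>l (norm (U, x)) \<le> mpc_cost A B Q R P \<epsilon> \<delta> Cx dx wx Cu du wu U x \<and>
           mpc_cost A B Q R P \<epsilon> \<delta> Cx dx wx Cu du wu U x \<le> \<alpha>u (norm (U, x))))
     \<and> (\<forall>x. strongly_convex_on UNIV (\<lambda>U :: real^'m^'N::enum. mpc_cost A B Q R P \<epsilon> \<delta> Cx dx wx Cu du wu U x))
     \<and> (\<forall>U :: real^'m^'N::enum. convex_on UNIV (\<lambda>x. mpc_cost A B Q R P \<epsilon> \<delta> Cx dx wx Cu du wu U x))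
     \<and> (\<exists>\<sigma> L. \<sigma> > 0 \<and> L > 0 \<and>
          (\<forall>x. \<exists>(g :: real^'m^'N::enum \<Rightarrow> real^'m^'N::enum) H.
             (\<forall>U. ((\<lambda>V. mpc_cost A B Q R P \<epsilon> \<delta> Cx dx wx Cu du wu V x) has_derivative (\<lambda>h. g U \<bullet> h)) (at U)
                  \<and> (g has_derivative H U) (at U)
                  \<and> (\<forall>h. \<sigma> * (norm h)\<^sup>2 \<le> h \<bullet> H U h \<and> h \<bullet> H U h \<le> L * (norm h)\<^sup>2))
             \<and> (\<forall>U1 U2. norm (g U1 - g U2) \<le> L * norm (U1 - U2))))
     \<and> (\<exists>kf :: real^'m^'N::enum \<Rightarrow> real^'n \<Rightarrow> real^'m. kf 0 0 = 0 \<and>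
          (\<forall>U0 x0.
             mpc_cost A B Q R P \<epsilon> \<delta> Cx dx wx Cu du wu (shift_in U0 (kf U0 x0)) (A *v x0 + B *v blk U0 0)
             - mpc_cost A B Q R P \<epsilon> \<delta> Cx dx wx Cu du wu U0 x0
             \<le> - stage_cost Q R \<epsilon> \<delta> Cx dx wx Cu du wu x0 (blk U0 0)))"
proof -
  have eps0: "0 \<le> \<epsilon>" using eps by simp
  have P1: "\<exists>\<alpha>l \<alpha>u. K_inf \<alpha>l \<and> K_inf \<alpha>u \<and>
        (\<forall>(U :: real^'m^'N::enum) x.
           \<alpha>l (norm (U, x)) \<le> mpc_cost A B Q R P \<epsilon> \<delta> Cx dx wx Cu du wu U x \<and>
           mpc_cost A B Q R P \<epsilon> \<delta> Cx dx wx Cu du wu U x \<le> \<alpha>u (norm (U, x)))"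
    by (rule part1[OF Xcomp dx_pos eps Qpsd Rpd delta_pos delta_x delta_u wx_nn wu_nn wx_cent wu_cent Ppd])
  have P2: "\<forall>x. strongly_convex_on UNIV (\<lambda>U :: real^'m^'N::enum. mpc_cost A B Q R P \<epsilon> \<delta> Cx dx wx Cu du wu U x)"
    using part_sconvU[OF eps Qpsd Rpd Ppd delta_pos wx_nn wu_nn] by blast
  have P3: "\<forall>U :: real^'m^'N::enum. convex_on UNIV (\<lambda>x. mpc_cost A B Q R P \<epsilon> \<delta> Cx dx wx Cu du wu U x)"
    using part_convx[OF eps Qpsd Ppd delta_pos wx_nn] by blast
  obtain \<sigma> L where sL: "\<sigma> > 0" "L > 0"
    "\<forall>x. \<exists>(g :: real^'m^'N::enum \<Rightarrow> real^'m^'N::enum) H. good (\<lambda>V. mpc_cost A B Q R P \<epsilon> \<delta> Cx dx wx Cu du wu V x) g H \<sigma> L"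
    using part2[OF eps Qpsd Rpd Ppd delta_pos wx_nn wu_nn] by blast
  have P4: "\<exists>\<sigma> L. \<sigma> > 0 \<and> L > 0 \<and>
          (\<forall>x. \<exists>(g :: real^'m^'N::enum \<Rightarrow> real^'m^'N::enum) H.
             (\<forall>U. ((\<lambda>V. mpc_cost A B Q R P \<epsilon> \<delta> Cx dx wx Cu du wu V x) has_derivative (\<lambda>h. g U \<bullet> h)) (at U)
                  \<and> (g has_derivative H U) (at U)
                  \<and> (\<forall>h. \<sigma> * (norm h)\<^sup>2 \<le> h \<bullet> H U h \<and> h \<bullet> H U h \<le> L * (norm h)\<^sup>2))
             \<and> (\<forall>U1 U2. norm (g U1 - g U2) \<le> L * norm (U1 - U2)))"
    using sL unfolding good_def by blast
  have tmi: "\<And>y. stage_cost Q R \<epsilon> \<delta> Cx dx wx Cu du wu y (K *v y)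
          + (A *v y + B *v (K *v y)) \<bullet> (P *v (A *v y + B *v (K *v y))) \<le> y \<bullet> (P *v y)"
    by (rule terminal_ineq[OF eps0 delta_pos delta_x delta_u wx_nn wu_nn wx_cent wu_cent Ric])
  have P5: "\<exists>kf :: real^'m^'N::enum \<Rightarrow> real^'n \<Rightarrow> real^'m. kf 0 0 = 0 \<and>
          (\<forall>U0 x0.
             mpc_cost A B Q R P \<epsilon> \<delta> Cx dx wx Cu du wu (shift_in U0 (kf U0 x0)) (A *v x0 + B *v blk U0 0)
             - mpc_cost A B Q R P \<epsilon> \<delta> Cx dx wx Cu du wu U0 x0
             \<le> - stage_cost Q R \<epsilon> \<delta> Cx dx wx Cu du wu x0 (blk U0 0))"
  proof (intro exI[of _ "\<lambda>U x. K *v traj A B x (blk U) CARD('N)"] conjI allI)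
    have "blk (0::real^'m^'N::enum) = (\<lambda>k. 0)" by (simp add: fun_eq_iff blk_zero)
    then show "K *v traj A B 0 (blk (0::real^'m^'N::enum)) CARD('N) = 0" by (simp add: traj_zero)
    fix U0 :: "real^'m^'N::enum" and x0
    show "mpc_cost A B Q R P \<epsilon> \<delta> Cx dx wx Cu du wu (shift_in U0 (K *v traj A B x0 (blk U0) CARD('N))) (A *v x0 + B *v blk U0 0)
             - mpc_cost A B Q R P \<epsilon> \<delta> Cx dx wx Cu du wu U0 x0
             \<le> - stage_cost Q R \<epsilon> \<delta> Cx dx wx Cu du wu x0 (blk U0 0)"
      by (rule decrease[OF tmi])
  qed
  show ?thesis using P1 P2 P3 P4 P5 by blast
qed

end
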